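(* Let $R>0$, let $\mathcal C$ be a finite point configuration in $\overline{C_R}$ and $\mu$ a bounded measurable function on $C_R$. For another finite configuration $\mathcal C'$ in $\overline{C_R}$ and bounded measurable $\mu'$ on $C_R$, set $$\tilde E_\eta=\nabla g_\eta*(\mathcal C-\mathcal C')-\nabla g*\big((\mu-\mu')\mathbf 1_{C_R}\delta_{\mathbb R^d}\big),\qquad g_\eta=\min(g,g(\eta)).$$ Then for every $\eta\in(0,1)$, $\int_{C_R\times[-R,R]^k}|y|^\gamma|\tilde E_\eta|^2\to0$ as $(\mathcal C',\mu')\to(\mathcal C,\mu)$ in $\mathcal X(\overline{C_R})\times L^\infty(C_R)$.
   Context: Fix $d\ge1$. Kernel cases: (L1) $d=1$, $g(x)=-\log|x|$; (L2) $d=2$, $g(x)=-\log|x|$; (R) $g(x)=|x|^{-s}$, $\max(0,d-2)\le s<d$; $s=0$ in (L1),(L2). $(k,\gamma)$: $k=1,\gamma=s-d+1$ in (R) with $s>\max(0,d-2)$; $k=1,\gamma=0$ in (L1); $k=0,\gamma=0$ in (L2) and in (R) with $d\ge3,s=d-2$. Points of $\mathbb R^{d+k}$: $X=(x,y)$; $\mathbb R^d\equiv\mathbb R^d\times\{0\}$; $g$ extended to $\mathbb R^{d+k}$ by $g(X)=|X|^{-s}$ (resp. $-\log|X|$), $g(\eta)$ its value at $|X|=\eta$; convolutions are taken in $\mathbb R^{d+k}$. For a measure or function $\mu$ on $\mathbb R^d$, $\mu\delta_{\mathbb R^d}$ is the measure $\varphi\mapsto\int\varphi(x,0)d\mu(x)$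 on $\mathbb R^{d+k}$. $C_R=[-R/2,R/2]^d$. A point configuration is a sum of Dirac masses with positive integer weights; $\mathcal X(\overline{C_R})$ is the space of such configurations in $\overline{C_R}$ with the topology of weak convergence of measures. *)

theory Defs
  imports "HOL-Analysis.Analysis"
begin

text \<open>Kernel cases.  The flag lg selects the logarithmic kernel (cases L1, L2, with s = 0);
  otherwise the Riesz kernel with exponent s (case R).  d is the dimension.\<close>

definition admissible :: "nat \<Rightarrow> bool \<Rightarrow> real \<Rightarrow> bool" where
  "admissible d lg s \<longleftrightarrow>
     (if lg then (d = 1 \<or> d = 2) \<and> s = 0
      else (max 0 (real d - 2) < s \<and> s < real d) \<or> (d \<ge> 3 \<and> s = real d - 2))"

definition kdim :: "nat \<Rightarrow> bool \<Rightarrow> real \<Rightarrow> nat" where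
  "kdim d lg s = (if lg then (if d = 1 then 1 else 0)
                  else (if max 0 (real d - 2) < s then 1 else 0))"

definition gam :: "nat \<Rightarrow> bool \<Rightarrow> real \<Rightarrow> real" where
  "gam d lg s = (if lg then 0 else if max 0 (real d - 2) < s then s - real d + 1 else 0)"

text \<open>Radial profile of the kernel: g(eta) is the value of g at |X| = eta.\<close>
definition gprof :: "bool \<Rightarrow> real \<Rightarrow> real \<Rightarrow> real" where
  "gprof lg s r = (if lg then - ln r else r powr (- s))"

definition gker :: "bool \<Rightarrow> real \<Rightarrow> 'b::real_normed_vector \<Rightarrow> real" where
  "gker lg s X = gprof lg s (norm X)"

definition gtrunc :: "bool \<Rightarrow> real \<Rightarrow> real \<Rightarrow> 'b::real_normed_vector \<Rightarrow> real" where
  "gtrunc lg s \<eta> X = min (gker lg s X) (gprof lg s \<eta>)"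

text \<open>Gradient (0 at points of non-differentiability, a null set here).\<close>
definition vgrad :: "('b::real_inner \<Rightarrow> real) \<Rightarrow> 'b \<Rightarrow> 'b" where
  "vgrad f X = (if \<exists>D. GDERIV f X :> D then (SOME D. GDERIV f X :> D) else 0)"

definition cube :: "real \<Rightarrow> 'a::euclidean_space set" where
  "cube R = cbox (- (R / 2) *\<^sub>R One) ((R / 2) *\<^sub>R One)"

text \<open>The field tilde E_eta on the ambient space 'b (= R^(d+k)); e embeds R^d as R^d x {0}.
  Point configurations are finite multisets of points.\<close>
definition Efield :: "bool \<Rightarrow> real \<Rightarrow> real \<Rightarrow> real \<Rightarrow> ('a::euclidean_space \<Rightarrow> 'b::euclidean_space)
    \<Rightarrow> 'a multiset \<Rightarrow> 'a multiset \<Rightarrow> ('a \<Rightarrow> real) \<Rightarrow> ('a \<Rightarrow> real) \<Rightarrow> 'b \<Rightarrow> 'b" where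
  "Efield lg s R \<eta> e C C' \<mu> \<mu>' X =
     (\<Sum>p\<in>#C. vgrad (gtrunc lg s \<eta>) (X - e p))
     - (\<Sum>p\<in>#C'. vgrad (gtrunc lg s \<eta>) (X - e p))
     - (LINT x : cube R | lebesgue. (\<mu> x - \<mu>' x) *\<^sub>R vgrad (gker lg s) (X - e x))"

definition energy :: "bool \<Rightarrow> real \<Rightarrow> real \<Rightarrow> real
    \<Rightarrow> 'a::euclidean_space multiset \<Rightarrow> 'a multiset \<Rightarrow> ('a \<Rightarrow> real) \<Rightarrow> ('a \<Rightarrow> real) \<Rightarrow> ennreal" where
  "energy lg s R \<eta> C C' \<mu> \<mu>' =
     (if kdim DIM('a) lg s = 1 then
        (\<integral>\<^sup>+ X. indicator (cube R \<times> {-R..R}) X *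
            ennreal (\<bar>snd X\<bar> powr gam DIM('a) lg s
                     * (norm (Efield lg s R \<eta> (\<lambda>x. (x, 0::real)) C C' \<mu> \<mu>' X))\<^sup>2) \<partial>lebesgue)
      else
        (\<integral>\<^sup>+ X. indicator (cube R) X *
            ennreal ((norm (Efield lg s R \<eta> (\<lambda>x. x) C C' \<mu> \<mu>' X))\<^sup>2) \<partial>lebesgue))"

end

theory Submission
  imports Defs
begin


definition dg :: "bool \<Rightarrow> real \<Rightarrow> real \<Rightarrow> real" where
  "dg lg s r = (if lg then - (1 / r) else - s * r powr (- s - 1))"

definition gradK :: "bool \<Rightarrow> real \<Rightarrow> 'b::real_inner \<Rightarrow> 'b" where
  "gradK lg s Z = (dg lg s (norm Z) / norm Z) *\<^sub>R Z"

definition cc :: "bool \<Rightarrow> real \<Rightarrow> real" where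
  "cc lg s = (if lg then 1 else s)"

lemma DERIV_gprof:
  assumes "r > 0" shows "DERIV (gprof lg s) r :> dg lg s r"
proof (cases lg)
  case True
  have "DERIV (\<lambda>r. - ln r) r :> - (1 / r)" using assms
    by (auto intro!: derivative_eq_intros)
  then show ?thesis using True by (simp add: gprof_def[abs_def] dg_def)
next
  case False
  have "DERIV (\<lambda>r. r powr (- s)) r :> - s * r powr (- s - 1)" using assms
    by (auto intro!: derivative_eq_intros simp: field_simps)
  then show ?thesis using False by (simp add: gprof_def[abs_def] dg_def)
qed

lemma GDERIV_gker:
  fixes Z :: "'b::real_inner"
  assumes "Z \<noteq> 0" shows "GDERIV (gker lg s) Z :> gradK lg s Z"
proof -
  have "GDERIV (\<lambda>x. gprof lg s (norm x)) Z :> dg lg s (norm Z) *\<^sub>R sgn Z"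
    by (rule GDERIV_DERIV_compose[OF GDERIV_norm[OF assms] DERIV_gprof]) (use assms in simp)
  moreover have "(\<lambda>x. gprof lg s (norm x)) = (gker lg s :: 'b \<Rightarrow> real)"
    by (simp add: gker_def[abs_def])
  ultimately show ?thesis by (simp add: gradK_def sgn_div_norm divide_inverse_commute mult.commute)
qed

lemma vgrad_eq:
  fixes f :: "'b::real_inner \<Rightarrow> real"
  assumes "GDERIV f X :> D" shows "vgrad f X = D"
proof -
  have uniq: "D' = D" if "GDERIV f X :> D'" for D'
  proof -
    have "(\<lambda>h. inner h D') = (\<lambda>h. inner h D)"
      using has_derivative_unique that assms unfolding gderiv_def by blast
    then have "inner (D' - D) D' = inner (D' - D) D" by metis
    then have "inner (D' - D) (D' - D) = 0" by (simp add: inner_diff_right)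
    then show ?thesis by simp
  qed
  have "GDERIV f X :> (SOME D. GDERIV f X :> D)" using assms by (rule someI)
  then show ?thesis unfolding vgrad_def using assms uniq by auto
qed

lemma vgrad_gker:
  fixes Z :: "'b::real_inner"
  assumes "Z \<noteq> 0" shows "vgrad (gker lg s) Z = gradK lg s Z"
  using vgrad_eq[OF GDERIV_gker[OF assms]] .

lemma norm_gradK:
  fixes Z :: "'b::real_inner"
  assumes "Z \<noteq> 0" "s \<ge> 0" "lg \<Longrightarrow> s = 0"
  shows "norm (gradK lg s Z) = cc lg s * norm Z powr (- (s + 1))"
  using assms
  by (auto simp: gradK_def dg_def cc_def powr_minus_divide powr_add powr_diff abs_mult field_simps)

definition mono_ok :: "bool \<Rightarrow> real \<Rightarrow> bool" where
  "mono_ok lg s \<longleftrightarrow> (lg \<longrightarrow> s = 0) \<and> (\<not> lg \<longrightarrow> s > 0)"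

lemma gprof_le:
  assumes "mono_ok lg s" "0 < a" "a \<le> b" shows "gprof lg s b \<le> gprof lg s a"
  using assms by (auto simp: mono_ok_def gprof_def intro!: powr_mono2')

lemma gprof_less:
  assumes "mono_ok lg s" "0 < a" "a < b" shows "gprof lg s b < gprof lg s a"
  using assms by (auto simp: mono_ok_def gprof_def intro!: powr_less_mono2_neg)

lemma vgrad_gtrunc_out:
  fixes Z :: "'b::real_inner"
  assumes "mono_ok lg s" "0 < \<eta>" "norm Z > \<eta>"
  shows "vgrad (gtrunc lg s \<eta>) Z = gradK lg s Z"
proof -
  have Z: "Z \<noteq> 0" using assms by auto
  have "(gker lg s has_derivative (\<lambda>h. inner h (gradK lg s Z))) (at Z)"
    using GDERIV_gker[OF Z] unfolding gderiv_def .
  then have "(gtrunc lg s \<eta> has_derivative (\<lambda>h. inner h (gradK lg s Z))) (at Z)"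
  proof (rule has_derivative_transform_within_open)
    show "open {W::'b. norm W > \<eta>}" by (intro open_Collect_less continuous_intros)
    show "Z \<in> {W. norm W > \<eta>}" using assms by simp
    fix W :: 'b assume "W \<in> {W. norm W > \<eta>}"
    then show "gker lg s W = gtrunc lg s \<eta> W"
      using gprof_le[OF assms(1) assms(2), of "norm W"]
      by (auto simp: gtrunc_def gker_def)
  qed
  then show ?thesis by (intro vgrad_eq) (simp add: gderiv_def)
qed

lemma vgrad_gtrunc_in:
  fixes Z :: "'b::real_inner"
  assumes "mono_ok lg s" "Z \<noteq> 0" "norm Z < \<eta>"
  shows "vgrad (gtrunc lg s \<eta>) Z = 0"
proof -
  have "((\<lambda>_. gprof lg s \<eta>) has_derivative (\<lambda>h. inner h 0)) (at Z)"
    by (simp add: has_derivative_const)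
  then have "(gtrunc lg s \<eta> has_derivative (\<lambda>h. inner h 0)) (at Z)"
  proof (rule has_derivative_transform_within_open)
    show "open {W::'b. 0 < norm W \<and> norm W < \<eta>}"
      by (intro open_Collect_conj open_Collect_less continuous_intros)
    show "Z \<in> {W. 0 < norm W \<and> norm W < \<eta>}" using assms by simp
    fix W :: 'b assume "W \<in> {W. 0 < norm W \<and> norm W < \<eta>}"
    then show "gprof lg s \<eta> = gtrunc lg s \<eta> W"
      using gprof_le[OF assms(1), of "norm W" \<eta>]
      by (auto simp: gtrunc_def gker_def)
  qed
  then show ?thesis by (intro vgrad_eq) (simp add: gderiv_def)
qed


lemma sum_mset_inner: "inner (\<Sum>p\<in>#M. f p) b = (\<Sum>p\<in>#M. inner (f p) b)"
  by (induction M) (simp_all add: inner_add_left)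

lemma norm_sum_mset_le: "norm (\<Sum>p\<in>#M. (f p :: 'c::real_normed_vector)) \<le> (\<Sum>p\<in>#M. norm (f p))"
  by (induction M) (auto intro: order_trans[OF norm_triangle_ineq])

lemma sum_mset_diff_fun: "(\<Sum>p\<in>#M. (f p :: 'c::ab_group_add)) - (\<Sum>p\<in>#M. g p) = (\<Sum>p\<in>#M. f p - g p)"
  by (induction M) (simp_all add: algebra_simps)

lemma sum_mset_nonneg_elem:
  fixes f :: "'a \<Rightarrow> real"
  assumes "x \<in># M" "\<And>y. y \<in># M \<Longrightarrow> f y \<ge> 0"
  shows "f x \<le> (\<Sum>p\<in>#M. f p)"
proof -
  obtain M' where M: "M = add_mset x M'" using assms(1) by (metis multi_member_split)
  have "\<forall>y\<in>#M'. f y \<ge> 0" using assms(2) M by auto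
  then have "(\<Sum>p\<in>#M'. f p) \<ge> 0" by (induction M') auto
  then show ?thesis using M by simp
qed

lemma weak_vec:
  fixes Cs :: "nat \<Rightarrow> 'a::metric_space multiset"
  assumes weak: "\<And>\<phi> :: 'a \<Rightarrow> real. continuous_on K \<phi> \<Longrightarrow>
                 (\<lambda>n. \<Sum>p\<in>#Cs n. \<phi> p) \<longlonglongrightarrow> (\<Sum>p\<in>#C. \<phi> p)"
    and cont: "continuous_on K (\<Phi> :: 'a \<Rightarrow> 'c::euclidean_space)"
  shows "(\<lambda>n. \<Sum>p\<in>#Cs n. \<Phi> p) \<longlonglongrightarrow> (\<Sum>p\<in>#C. \<Phi> p)"
proof -
  have rep: "(\<Sum>p\<in>#M. \<Phi> p) = (\<Sum>b\<in>Basis. (\<Sum>p\<in>#M. inner (\<Phi> p) b) *\<^sub>R b)" for M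
    by (subst euclidean_representation[symmetric]) (simp add: sum_mset_inner)
  have "(\<lambda>n. \<Sum>b\<in>Basis. (\<Sum>p\<in>#Cs n. inner (\<Phi> p) b) *\<^sub>R b) \<longlonglongrightarrow> (\<Sum>b\<in>Basis. (\<Sum>p\<in>#C. inner (\<Phi> p) b) *\<^sub>R b)"
    by (intro tendsto_intros weak continuous_intros cont)
  then show ?thesis by (simp add: rep)
qed

lemma weak_size:
  fixes Cs :: "nat \<Rightarrow> 'a::topological_space multiset"
  assumes weak: "\<And>\<phi> :: 'a \<Rightarrow> real. continuous_on K \<phi> \<Longrightarrow>
                 (\<lambda>n. \<Sum>p\<in>#Cs n. \<phi> p) \<longlonglongrightarrow> (\<Sum>p\<in>#C. \<phi> p)"
  shows "eventually (\<lambda>n. size (Cs n) = size C) sequentially"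
proof -
  have "(\<lambda>n. real (size (Cs n))) \<longlonglongrightarrow> real (size C)"
    using weak[of "\<lambda>_. 1"] by simp
  then have "eventually (\<lambda>n. dist (real (size (Cs n))) (real (size C)) < 1/2) sequentially"
    by (rule tendstoD) simp
  then show ?thesis
  proof eventually_elim
    case (elim n)
    show ?case
    proof (rule ccontr)
      assume "size (Cs n) \<noteq> size C"
      then have "size (Cs n) + 1 \<le> size C \<or> size C + 1 \<le> size (Cs n)" by linarith
      then have "real (size (Cs n)) + 1 \<le> real (size C) \<or> real (size C) + 1 \<le> real (size (Cs n))"
        by (metis of_nat_1 of_nat_add of_nat_le_iff)
      then show False using elim by (auto simp: dist_real_def)
    qed
  qed
qed

lemma weak_isCont:
  fixes Cs :: "nat \<Rightarrow> 'a::metric_space multiset" and \<phi> :: "'a \<Rightarrow> 'c::euclidean_space"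
  assumes weak: "\<And>\<phi> :: 'a \<Rightarrow> real. continuous_on K \<phi> \<Longrightarrow>
                 (\<lambda>n. \<Sum>p\<in>#Cs n. \<phi> p) \<longlonglongrightarrow> (\<Sum>p\<in>#C. \<phi> p)"
    and cont: "\<And>q. q \<in># C \<Longrightarrow> isCont \<phi> q"
  shows "(\<lambda>n. \<Sum>p\<in>#Cs n. \<phi> p) \<longlonglongrightarrow> (\<Sum>p\<in>#C. \<phi> p)"
proof (cases "C = {#}")
  case True
  have "eventually (\<lambda>n. Cs n = {#}) sequentially"
    using weak_size[where K=K, OF weak] True by simp
  then have "eventually (\<lambda>n. (\<Sum>p\<in>#Cs n. \<phi> p) = (\<Sum>p\<in>#C. \<phi> p)) sequentially"
    by eventually_elim (simp add: True)
  then show ?thesis by (rule tendsto_eventually)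
next
  case False
  define S where "S = set_mset C"
  define N where "N = size C"
  have S: "finite S" "S \<noteq> {}" using False by (auto simp: S_def)
  show ?thesis
  proof (rule tendstoI)
    fix \<epsilon> :: real assume \<epsilon>: "\<epsilon> > 0"
    define e where "e = \<epsilon> / (real N + 1)"
    have e: "e > 0" using \<epsilon> by (simp add: e_def)
    have ev1: "\<forall>q\<in>S. eventually (\<lambda>\<delta>. \<forall>p. dist p q < \<delta> \<longrightarrow> dist (\<phi> p) (\<phi> q) < e) (at_right (0::real))"
    proof
      fix q assume "q \<in> S"
      then obtain d where d: "d > 0" "\<forall>p. dist p q < d \<longrightarrow> dist (\<phi> p) (\<phi> q) < e"
        using cont[of q] e unfolding S_def continuous_at_eps_delta by (metis dist_commute)
      show "eventually (\<lambda>\<delta>. \<forall>p. dist p q < \<delta> \<longrightarrow> dist (\<phi> p) (\<phi> q) < e) (at_right (0::real))"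
        unfolding eventually_at_right[OF d(1)] using d by (intro exI[of _ d]) auto
    qed
    have ev2: "\<forall>q\<in>S \<times> S. eventually (\<lambda>\<delta>. fst q \<noteq> snd q \<longrightarrow> 5 * \<delta> < dist (fst q) (snd q)) (at_right (0::real))"
    proof
      fix q assume "q \<in> S \<times> S"
      show "eventually (\<lambda>\<delta>. fst q \<noteq> snd q \<longrightarrow> 5 * \<delta> < dist (fst q) (snd q)) (at_right (0::real))"
      proof (cases "fst q = snd q")
        case False
        then have "dist (fst q) (snd q) / 5 > 0" by simp
        then show ?thesis unfolding eventually_at_right[OF \<open>dist (fst q) (snd q) / 5 > 0\<close>]
          by (intro exI[of _ "dist (fst q) (snd q) / 5"]) auto
      qed simp
    qed
    have "eventually (\<lambda>\<delta>. (\<forall>q\<in>S. \<forall>p. dist p q < \<delta> \<longrightarrow> dist (\<phi> p) (\<phi> q) < e) \<and>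
        (\<forall>q\<in>S \<times> S. fst q \<noteq> snd q \<longrightarrow> 5 * \<delta> < dist (fst q) (snd q))) (at_right (0::real))"
      using eventually_ball_finite[OF S(1) ev1] eventually_ball_finite[OF finite_cartesian_product[OF S(1) S(1)] ev2]
      by (rule eventually_conj)
    then obtain b where b: "b > 0" "\<And>\<delta>. 0 < \<delta> \<Longrightarrow> \<delta> < b \<Longrightarrow> (\<forall>q\<in>S. \<forall>p. dist p q < \<delta> \<longrightarrow> dist (\<phi> p) (\<phi> q) < e) \<and>
        (\<forall>q\<in>S \<times> S. fst q \<noteq> snd q \<longrightarrow> 5 * \<delta> < dist (fst q) (snd q))"
      unfolding eventually_at_right_field by blast
    define \<delta> where "\<delta> = b / 2"
    have \<delta>: "\<delta> > 0" "\<delta> < b" using b(1) by (auto simp: \<delta>_def)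
    have d\<phi>: "\<And>q p. q \<in> S \<Longrightarrow> dist p q < \<delta> \<Longrightarrow> dist (\<phi> p) (\<phi> q) < e"
      and sep: "\<And>q q'. q \<in> S \<Longrightarrow> q' \<in> S \<Longrightarrow> q \<noteq> q' \<Longrightarrow> 5 * \<delta> < dist q q'"
      using b(2)[OF \<delta>] by auto
    define chi where "chi (q::'a) (p::'a) = max 0 (min 1 (2 - dist p q / \<delta>))" for q p
    define \<Phi> where "\<Phi> p = (\<Sum>q\<in>S. chi q p *\<^sub>R \<phi> q)" for p
    have near: "\<Phi> p = \<phi> q" if q: "q \<in> S" "dist p q < \<delta>" for p q
    proof -
      have "chi q p = 1" using q \<delta> by (simp add: chi_def field_simps)
      moreover have "chi q' p = 0" if "q' \<in> S - {q}" for q'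
      proof -
        have "5 * \<delta> < dist q q'" using sep[of q q'] that q by auto
        moreover have "dist q q' \<le> dist p q + dist p q'" by (metis dist_commute dist_triangle)
        ultimately have "2 - dist p q' / \<delta> \<le> 0" using q \<delta> by (simp add: field_simps)
        then show ?thesis by (simp add: chi_def)
      qed
      ultimately show ?thesis unfolding \<Phi>_def
        by (simp add: sum.remove[OF S(1) q(1)])
    qed
    have contPhi: "continuous_on K \<Phi>" unfolding \<Phi>_def chi_def
      by (intro continuous_intros) (use \<delta> in auto)
    have sumC: "(\<Sum>p\<in>#C. \<Phi> p) = (\<Sum>p\<in>#C. \<phi> p)"
      by (rule arg_cong[where f=sum_mset], rule image_mset_cong) (use near \<delta> in \<open>auto simp: S_def\<close>)
    define \<psi> where "\<psi> p = min 1 (infdist p S / \<delta>)" for p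
    have contpsi: "continuous_on K \<psi>" unfolding \<psi>_def
      by (intro continuous_intros) (use \<delta> in auto)
    have "(\<Sum>p\<in>#C. \<psi> p) = (\<Sum>p\<in>#C. 0)"
      by (rule arg_cong[where f=sum_mset], rule image_mset_cong) (auto simp: \<psi>_def S_def)
    then have psiC: "(\<Sum>p\<in>#C. \<psi> p) = 0" by simp
    have ev_psi: "eventually (\<lambda>n. dist (\<Sum>p\<in>#Cs n. \<psi> p) 0 < 1) sequentially"
      using tendstoD[OF weak[OF contpsi], of 1] psiC by simp
    have ev_Phi: "eventually (\<lambda>n. dist (\<Sum>p\<in>#Cs n. \<Phi> p) (\<Sum>p\<in>#C. \<Phi> p) < e) sequentially"
      using tendstoD[OF weak_vec[OF weak contPhi] e] .
    have evs: "eventually (\<lambda>n. size (Cs n) = size C) sequentially"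
      by (rule weak_size[of K]) (rule weak)
    show "eventually (\<lambda>n. dist (\<Sum>p\<in>#Cs n. \<phi> p) (\<Sum>p\<in>#C. \<phi> p) < \<epsilon>) sequentially"
      using ev_psi ev_Phi evs
    proof eventually_elim
      case (elim n)
      have loc: "norm (\<phi> p - \<Phi> p) \<le> e" if p: "p \<in># Cs n" for p
      proof -
        have "\<psi> p \<le> (\<Sum>p\<in>#Cs n. \<psi> p)"
          by (rule sum_mset_nonneg_elem[OF p]) (use \<delta> in \<open>auto simp: \<psi>_def infdist_nonneg\<close>)
        also have "\<dots> < 1" using elim(1) by (simp add: dist_real_def)
        finally have "infdist p S / \<delta> < 1" by (simp add: \<psi>_def)
        then have "infdist p S < \<delta>" using \<delta> by (simp add: field_simps)
        then have "(INF a\<in>S. dist p a) < \<delta>" using infdist_notempty[OF S(2)] by simp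
        then obtain q where q: "q \<in> S" "dist p q < \<delta>"
          by (subst (asm) cINF_less_iff) (use S(2) in \<open>auto intro: bdd_belowI[of _ 0]\<close>)
        show ?thesis using near[OF q] d\<phi>[OF q] by (simp add: dist_norm)
      qed
      have "norm ((\<Sum>p\<in>#Cs n. \<phi> p) - (\<Sum>p\<in>#Cs n. \<Phi> p)) \<le> (\<Sum>p\<in>#Cs n. norm (\<phi> p - \<Phi> p))"
        by (simp add: sum_mset_diff_fun norm_sum_mset_le)
      also have "\<dots> \<le> (\<Sum>p\<in>#Cs n. e)" by (rule sum_mset_mono) (use loc in auto)
      also have "\<dots> = real N * e" using elim(3) by (simp add: N_def)
      finally have A: "norm ((\<Sum>p\<in>#Cs n. \<phi> p) - (\<Sum>p\<in>#Cs n. \<Phi> p)) \<le> real N * e" .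
      have B: "norm ((\<Sum>p\<in>#Cs n. \<Phi> p) - (\<Sum>p\<in>#C. \<phi> p)) < e"
        using elim(2) sumC by (simp add: dist_norm)
      have "dist (\<Sum>p\<in>#Cs n. \<phi> p) (\<Sum>p\<in>#C. \<phi> p)
          \<le> norm ((\<Sum>p\<in>#Cs n. \<phi> p) - (\<Sum>p\<in>#Cs n. \<Phi> p)) + norm ((\<Sum>p\<in>#Cs n. \<Phi> p) - (\<Sum>p\<in>#C. \<phi> p))"
        unfolding dist_norm by (rule order_trans[OF _ norm_triangle_ineq]) simp
      also have "\<dots> < real N * e + e" using A B by simp
      also have "\<dots> = \<epsilon>"
      proof -
        have "real N * e + e = (real N + 1) * e" by (simp add: algebra_simps)
        also have "\<dots> = \<epsilon>" unfolding e_def by (simp add: add_pos_nonneg)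
        finally show ?thesis .
      qed
      finally show ?case .
    qed
  qed
qed


lemma integrable_abs_powr:
  assumes a: "a > -1" and T: "T \<ge> 0"
  shows "(\<lambda>t::real. \<bar>t\<bar> powr a) integrable_on {-T..T}"
proof -
  have i1: "(\<lambda>t::real. \<bar>t\<bar> powr a) integrable_on {0..T}"
    by (rule integrable_eq[OF integrable_on_powr_from_0[OF a T]]) auto
  have i2: "(\<lambda>t::real. \<bar>t\<bar> powr a) integrable_on {-T..0}"
    using Henstock_Kurzweil_Integration.integrable_reflect_real[where f="\<lambda>t::real. \<bar>t\<bar> powr a" and a=0 and b=T] i1 by simp
  show ?thesis by (rule Henstock_Kurzweil_Integration.integrable_combine[OF _ _ i2 i1]) (use T in auto)
qed

lemma nn_abs_powr_finite:
  assumes a: "a > -1" and T: "T \<ge> 0"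
  shows "(\<integral>\<^sup>+ t. indicator {-T..T} t * ennreal (\<bar>t::real\<bar> powr a) \<partial>lborel) < \<infinity>"
proof -
  obtain I where I: "((\<lambda>t::real. \<bar>t\<bar> powr a) has_integral I) {-T..T}"
    using integrable_abs_powr[OF a T] by (auto simp: integrable_on_def)
  have "(\<integral>\<^sup>+ t. indicator {-T..T} t * ennreal (\<bar>t::real\<bar> powr a) \<partial>lborel)
     = (\<integral>\<^sup>+ t. ennreal (indicator {-T..T} t * \<bar>t::real\<bar> powr a) \<partial>lborel)"
    by (intro nn_integral_cong) (auto split: split_indicator)
  also have "\<dots> = ennreal I"
    using nn_integral_has_integral_lebesgue[OF _ I] by simp
  finally show ?thesis by simp
qed

lemma shift_1d:
  fixes R p c :: real
  assumes c: "\<bar>c\<bar> \<le> R / 2"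
  shows "(\<integral>\<^sup>+ t. ennreal (indicator {-(R/2)..R/2} t * \<bar>c - t\<bar> powr (-p)) \<partial>lborel)
       \<le> (\<integral>\<^sup>+ t. indicator {-R..R} t * ennreal (\<bar>t\<bar> powr (-p)) \<partial>lborel)"
proof -
  let ?g = "\<lambda>t::real. indicator {-R..R} t * ennreal (\<bar>t\<bar> powr (-p))"
  have "(\<integral>\<^sup>+ t. ?g t \<partial>lborel) = ennreal \<bar>-1\<bar> * (\<integral>\<^sup>+ x. ?g (c + (-1) * x) \<partial>lborel)"
    by (rule nn_integral_real_affine) auto
  also have "\<dots> = (\<integral>\<^sup>+ x. ?g (c - x) \<partial>lborel)" by simp
  finally have eq: "(\<integral>\<^sup>+ t. ?g t \<partial>lborel) = (\<integral>\<^sup>+ x. ?g (c - x) \<partial>lborel)" .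
  have "(\<integral>\<^sup>+ t. ennreal (indicator {-(R/2)..R/2} t * \<bar>c - t\<bar> powr (-p)) \<partial>lborel)
      \<le> (\<integral>\<^sup>+ x. ?g (c - x) \<partial>lborel)"
    by (rule nn_integral_mono) (use c in \<open>auto simp: indicator_def\<close>)
  then show ?thesis using eq by simp
qed

lemma cube_indicator:
  fixes x :: "'a::euclidean_space"
  shows "indicator (cube R) x = (\<Prod>b\<in>Basis. indicator {-(R/2)..R/2} (x \<bullet> b) :: real)"
  by (auto simp: cube_def mem_box indicator_def prod.neutral_const prod_zero_iff)

lemma cube_prod_int:
  fixes X1 :: "'a::euclidean_space"
  assumes X1: "X1 \<in> cube R"
  shows "(\<integral>\<^sup>+ x. indicator (cube R) x * ennreal (\<Prod>b\<in>Basis. \<bar>(X1 - x) \<bullet> b\<bar> powr (-p)) \<partial>lborel)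
     \<le> (\<integral>\<^sup>+ t. indicator {-R..R} t * ennreal (\<bar>t::real\<bar> powr (-p)) \<partial>lborel) ^ DIM('a)"
proof -
  define f where "f b t = ennreal (indicator {-(R/2)..R/2} t * \<bar>X1 \<bullet> b - t\<bar> powr (-p))" for b and t :: real
  have "(\<integral>\<^sup>+ x. indicator (cube R) x * ennreal (\<Prod>b\<in>Basis. \<bar>(X1 - x) \<bullet> b\<bar> powr (-p)) \<partial>lborel)
      = (\<integral>\<^sup>+ x. (\<Prod>b\<in>Basis. f b (x \<bullet> b)) \<partial>lborel)"
  proof (intro nn_integral_cong)
    fix x :: 'a
    have "indicator (cube R) x * ennreal (\<Prod>b\<in>Basis. \<bar>(X1 - x) \<bullet> b\<bar> powr (-p))
        = ennreal (indicator (cube R) x * (\<Prod>b\<in>Basis. \<bar>(X1 - x) \<bullet> b\<bar> powr (-p)))"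
      by (simp add: indicator_mult_ennreal ennreal_mult' mult.commute)
    also have "\<dots> = ennreal (\<Prod>b\<in>Basis. indicator {-(R/2)..R/2} (x \<bullet> b) * \<bar>X1 \<bullet> b - x \<bullet> b\<bar> powr (-p))"
      by (simp add: cube_indicator prod.distrib inner_diff_left)
    also have "\<dots> = (\<Prod>b\<in>Basis. f b (x \<bullet> b))"
      unfolding f_def by (rule prod_ennreal[symmetric]) auto
    finally show "indicator (cube R) x * ennreal (\<Prod>b\<in>Basis. \<bar>(X1 - x) \<bullet> b\<bar> powr (-p)) = (\<Prod>b\<in>Basis. f b (x \<bullet> b))" .
  qed
  also have "\<dots> = (\<Prod>b\<in>Basis. (\<integral>\<^sup>+ t. f b t \<partial>lborel))"
    by (rule nn_integral_lborel_prod) (auto simp: f_def)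
  also have "\<dots> \<le> (\<Prod>b::'a\<in>Basis. (\<integral>\<^sup>+ t. indicator {-R..R} t * ennreal (\<bar>t::real\<bar> powr (-p)) \<partial>lborel))"
  proof (rule prod_mono_ennreal)
    fix b :: 'a assume b: "b \<in> Basis"
    have "\<bar>X1 \<bullet> b\<bar> \<le> R / 2" using X1 b by (auto simp: cube_def mem_box)
    then show "(\<integral>\<^sup>+ t. f b t \<partial>lborel) \<le> (\<integral>\<^sup>+ t. indicator {-R..R} t * ennreal (\<bar>t::real\<bar> powr (-p)) \<partial>lborel)"
      unfolding f_def by (rule shift_1d)
  qed
  also have "\<dots> = (\<integral>\<^sup>+ t. indicator {-R..R} t * ennreal (\<bar>t::real\<bar> powr (-p)) \<partial>lborel) ^ DIM('a)"
    by simp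
  finally show ?thesis .
qed


definition Gp :: "bool \<Rightarrow> real \<Rightarrow> real \<Rightarrow> 'b::real_inner \<Rightarrow> 'b" where
  "Gp lg s \<eta> Z = (if \<eta> < norm Z then gradK lg s Z else 0)"

lemma mono_ok_s: "mono_ok lg s \<Longrightarrow> s \<ge> 0" by (auto simp: mono_ok_def)

lemma norm_Gp:
  assumes "mono_ok lg s" "0 < \<eta>"
  shows "norm (Gp lg s \<eta> Z) \<le> cc lg s * \<eta> powr (- (s + 1))"
proof (cases "\<eta> < norm Z")
  case True
  then have Z: "Z \<noteq> 0" using assms by auto
  have cc: "cc lg s \<ge> 0" using assms by (auto simp: cc_def mono_ok_def)
  have "norm (Gp lg s \<eta> Z) = cc lg s * norm Z powr (- (s + 1))"
    using True norm_gradK[OF Z mono_ok_s[OF assms(1)]] assms(1) by (auto simp: Gp_def mono_ok_def)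
  also have "\<dots> \<le> cc lg s * \<eta> powr (- (s + 1))"
    using True assms mono_ok_s[OF assms(1)] cc by (intro mult_left_mono powr_mono2') auto
  finally show ?thesis .
next
  case False
  have "cc lg s \<ge> 0" using assms by (auto simp: cc_def mono_ok_def)
  then show ?thesis using False by (simp add: Gp_def)
qed

lemma Gp_meas: "(Gp lg s \<eta> :: 'b::euclidean_space \<Rightarrow> 'b) \<in> borel_measurable borel"
  unfolding Gp_def[abs_def] gradK_def dg_def by (cases lg) measurable

lemma isCont_Gp:
  fixes Z :: "'b::real_inner"
  assumes "norm Z \<noteq> \<eta>" "0 < \<eta>"
  shows "isCont (Gp lg s \<eta>) Z"
proof (cases "\<eta> < norm Z")
  case True
  have Z: "Z \<noteq> 0" using True assms by auto
  have "isCont (gradK lg s) Z" using Z unfolding gradK_def dg_def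
    by (cases lg) (auto intro!: continuous_intros simp: netlimit_at_vector)
  moreover have "eventually (\<lambda>W. gradK lg s W = Gp lg s \<eta> W) (nhds Z)"
    unfolding Gp_def using True
    by (intro eventually_nhds_in_open[of "{W. \<eta> < norm W}", THEN eventually_mono])
       (auto intro!: open_Collect_less continuous_intros)
  ultimately show ?thesis using isCont_cong by blast
next
  case False
  then have "norm Z < \<eta>" using assms by auto
  have "eventually (\<lambda>W. 0 = Gp lg s \<eta> W) (nhds Z)"
    unfolding Gp_def using \<open>norm Z < \<eta>\<close>
    by (intro eventually_nhds_in_open[of "{W. norm W < \<eta>}", THEN eventually_mono])
       (auto intro!: open_Collect_less continuous_intros)
  then show ?thesis using isCont_cong[of "\<lambda>_. 0"] by auto
qed

lemma vgrad_gtrunc_Gp: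
  fixes Z :: "'b::real_inner"
  assumes "mono_ok lg s" "0 < \<eta>" "Z \<noteq> 0" "norm Z \<noteq> \<eta>"
  shows "vgrad (gtrunc lg s \<eta>) Z = Gp lg s \<eta> Z"
  using assms vgrad_gtrunc_out[OF assms(1,2)] vgrad_gtrunc_in[OF assms(1,3)]
  by (auto simp: Gp_def)

lemma borel_measurable_sum_mset:
  fixes f :: "'x \<Rightarrow> 'y \<Rightarrow> 'c::{second_countable_topology, real_normed_vector}"
  assumes "\<And>p. p \<in># M \<Longrightarrow> f p \<in> borel_measurable N"
  shows "(\<lambda>X. \<Sum>p\<in>#M. f p X) \<in> borel_measurable N"
  using assms by (induction M) auto

lemma ennreal_tendsto_0I:
  assumes "\<And>r. r > 0 \<Longrightarrow> eventually (\<lambda>n. f n \<le> ennreal r) F"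
  shows "(f \<longlongrightarrow> (0::ennreal)) F"
proof (rule order_tendstoI)
  fix a :: ennreal assume "0 < a"
  show "eventually (\<lambda>n. f n < a) F"
  proof (cases a)
    case (real a')
    then have "a' > 0" using \<open>0 < a\<close> by auto
    have lt: "ennreal (a' / 2) < ennreal a'" using \<open>a' > 0\<close> by (simp add: ennreal_less_iff)
    show ?thesis using assms[of "a' / 2"] \<open>a' > 0\<close>
      by (auto elim!: eventually_mono simp: real intro: le_less_trans[OF _ lt])
  next
    case top
    show ?thesis using assms[of 1] by (auto elim!: eventually_mono simp: top intro: le_less_trans)
  qed
qed auto


lemma LINT_bound:
  fixes F :: "'a::euclidean_space \<Rightarrow> 'b::euclidean_space" and f g :: "'a \<Rightarrow> real"
  assumes ae: "AE x in lebesgue. x \<in> K \<longrightarrow> \<bar>f x - g x\<bar> \<le> \<epsilon>" and \<epsilon>: "\<epsilon> \<ge> 0" and Phi: "\<Phi> \<ge> 0"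
    and FB: "(\<integral>\<^sup>+ x. ennreal (\<epsilon> * (indicator K x * norm (F x))) \<partial>lebesgue) \<le> ennreal (\<epsilon> * \<Phi>)"
  shows "norm (LINT x : K | lebesgue. (g x - f x) *\<^sub>R F x) \<le> \<epsilon> * \<Phi>"
proof (cases "integrable lebesgue (\<lambda>x. indicator K x *\<^sub>R ((g x - f x) *\<^sub>R F x))")
  case True
  have "ennreal (norm (LINT x : K | lebesgue. (g x - f x) *\<^sub>R F x))
      \<le> (\<integral>\<^sup>+ x. norm (indicator K x *\<^sub>R ((g x - f x) *\<^sub>R F x)) \<partial>lebesgue)"
    unfolding set_lebesgue_integral_def by (rule integral_norm_bound_ennreal[OF True])
  also have "\<dots> \<le> (\<integral>\<^sup>+ x. ennreal (\<epsilon> * (indicator K x * norm (F x))) \<partial>lebesgue)"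
  proof (rule nn_integral_mono_AE)
    show "AE x in lebesgue. ennreal (norm (indicator K x *\<^sub>R ((g x - f x) *\<^sub>R F x))) \<le> ennreal (\<epsilon> * (indicator K x * norm (F x)))"
      using ae
    proof eventually_elim
      case (elim x)
      show ?case
      proof (cases "x \<in> K")
        case True
        then have "\<bar>g x - f x\<bar> * norm (F x) \<le> \<epsilon> * norm (F x)"
          using elim by (intro mult_right_mono) (auto simp: abs_minus_commute)
        then show ?thesis using True by (intro ennreal_leI) simp
      qed simp
    qed
  qed
  also have "\<dots> \<le> ennreal (\<epsilon> * \<Phi>)" by (rule FB)
  finally show ?thesis using \<epsilon> Phi by (simp add: ennreal_le_iff)
next
  case False
  then show ?thesis using \<epsilon> Phi
    by (simp add: set_lebesgue_integral_def not_integrable_integral_eq)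
qed


lemma sq_sum_le: "(a + b)\<^sup>2 \<le> 2 * a\<^sup>2 + 2 * (b::real)\<^sup>2"
proof -
  have "0 \<le> (a - b)\<^sup>2" by simp
  then show ?thesis by (simp add: power2_eq_square algebra_simps)
qed

lemma wD_meas: assumes D[measurable]: "D \<in> sets borel" and w[measurable]: "(w::'b::euclidean_space\<Rightarrow>real) \<in> borel_measurable borel"
  shows "(\<lambda>x. indicator D x * ennreal (w x)) \<in> borel_measurable lborel"
  by measurable

lemma core:
  fixes e :: "'a::euclidean_space \<Rightarrow> 'b::euclidean_space" and D :: "'b set" and w \<Phi> :: "'b \<Rightarrow> real"
    and C :: "'a multiset" and \<mu> :: "'a \<Rightarrow> real" and Cs :: "nat \<Rightarrow> 'a multiset" and \<mu>s :: "nat \<Rightarrow> 'a \<Rightarrow> real"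
  assumes mono: "mono_ok lg s" and eta: "0 < \<eta>"
    and econt: "continuous_on UNIV e" and emeas[measurable]: "e \<in> borel_measurable borel"
    and D[measurable]: "D \<in> sets borel"
    and w[measurable]: "w \<in> borel_measurable borel" and wnn: "\<And>X. w X \<ge> 0"
    and wfin: "(\<integral>\<^sup>+ X. indicator D X * ennreal (w X) \<partial>lborel) < \<infinity>"
    and Phi[measurable]: "\<Phi> \<in> borel_measurable borel" and Phinn: "\<And>X. \<Phi> X \<ge> 0"
    and Phifin: "(\<integral>\<^sup>+ X. indicator D X * ennreal (w X * (\<Phi> X)\<^sup>2) \<partial>lborel) < \<infinity>"
    and Fbound: "AE X in lborel. X \<in> D \<longrightarrow> (\<forall>c\<ge>0. (\<integral>\<^sup>+ x. ennreal (c * (indicator (cube R) x * norm (vgrad (gker lg s) (X - e x)))) \<partial>lebesgue) \<le> ennreal (c * \<Phi> X))"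
    and weak: "\<And>\<phi> :: 'a \<Rightarrow> real. continuous_on (cube R) \<phi> \<Longrightarrow>
                 (\<lambda>n. \<Sum>p\<in>#Cs n. \<phi> p) \<longlonglongrightarrow> (\<Sum>p\<in>#C. \<phi> p)"
    and Linf: "\<And>\<epsilon>. \<epsilon> > 0 \<Longrightarrow>
                 eventually (\<lambda>n. AE x in lebesgue. x \<in> cube R \<longrightarrow> \<bar>\<mu>s n x - \<mu> x\<bar> \<le> \<epsilon>) sequentially"
  shows "(\<lambda>n. \<integral>\<^sup>+ X. indicator D X * ennreal (w X * (norm (Efield lg s R \<eta> e C (Cs n) \<mu> (\<mu>s n) X))\<^sup>2) \<partial>lebesgue) \<longlonglongrightarrow> 0"
proof -
  define P where "P n X = (\<Sum>p\<in>#C. Gp lg s \<eta> (X - e p)) - (\<Sum>p\<in>#Cs n. Gp lg s \<eta> (X - e p))" for n X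
  define Mb where "Mb = cc lg s * \<eta> powr (- (s + 1))"
  define N where "N = size C"
  define u where "u n X = indicator D X * w X * (norm (P n X))\<^sup>2" for n X
  define Q where "Q = set_mset C \<union> (\<Union>n. set_mset (Cs n))"
  have Qc1: "countable (set_mset C)" by (rule countable_finite) simp
  have Qc2: "countable (\<Union>n. set_mset (Cs n))" by (rule countable_UN) (auto intro: countable_finite)
  have Qc: "countable Q" unfolding Q_def using Qc1 Qc2 by simp
  have AEQ: "AE X in lborel. \<forall>p\<in>Q. X - e p \<noteq> 0 \<and> norm (X - e p) \<noteq> \<eta>"
  proof (subst AE_ball_countable[OF Qc], intro ballI)
    fix p
    have "sphere (e p) \<eta> \<in> null_sets lebesgue"
      using negligible_sphere[of "e p" \<eta>] by (simp add: negligible_iff_null_sets)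
    then obtain N' where N': "N' \<in> null_sets lborel" "sphere (e p) \<eta> \<subseteq> N'"
      unfolding null_sets_completion_iff2 by blast
    show "AE X in lborel. X - e p \<noteq> 0 \<and> norm (X - e p) \<noteq> \<eta>"
      using AE_lborel_singleton[of "e p"] AE_not_in[OF N'(1)]
    proof eventually_elim
      case (elim X)
      then have "X \<notin> sphere (e p) \<eta>" using N'(2) by blast
      then have "norm (X - e p) \<noteq> \<eta>" by (simp add: dist_norm norm_minus_commute)
      then show ?case using elim by simp
    qed
  qed
  have wDm: "(\<lambda>x. indicator D x * ennreal (w x)) \<in> borel_measurable lborel" by (rule wD_meas[OF D w])
  have Gmeas[measurable]: "(Gp lg s \<eta> :: 'b \<Rightarrow> 'b) \<in> borel_measurable borel" by (rule Gp_meas)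
  have Gpm: "(\<lambda>X. Gp lg s \<eta> (X - e p)) \<in> borel_measurable borel" for p
    by (rule measurable_compose[OF _ Gmeas]) (intro borel_measurable_diff emeas borel_measurable_const measurable_ident_sets refl)
  have Pmeas[measurable]: "P n \<in> borel_measurable borel" for n
    unfolding P_def[abs_def] by (intro borel_measurable_diff borel_measurable_sum_mset Gpm)
  have umeas[measurable]: "u n \<in> borel_measurable borel" for n
    unfolding u_def[abs_def]
    by (intro borel_measurable_times borel_measurable_power measurable_compose[OF Pmeas borel_measurable_norm] w
        borel_measurable_indicator D)
  have Mb: "norm (Gp lg s \<eta> Z) \<le> Mb" for Z :: 'b
    unfolding Mb_def by (rule norm_Gp[OF mono eta])
  have evsize: "eventually (\<lambda>n. size (Cs n) = size C) sequentially"
    by (rule weak_size[of "cube R"]) (rule weak)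
  then obtain N0 where N0: "\<And>n. n \<ge> N0 \<Longrightarrow> size (Cs n) = N"
    unfolding eventually_sequentially N_def by blast
  have normsum: "norm (\<Sum>p\<in>#M. Gp lg s \<eta> (X - e p)) \<le> real (size M) * Mb" for M X
  proof -
    have "norm (\<Sum>p\<in>#M. Gp lg s \<eta> (X - e p)) \<le> (\<Sum>p\<in>#M. norm (Gp lg s \<eta> (X - e p)))"
      by (rule norm_sum_mset_le)
    also have "\<dots> \<le> (\<Sum>p\<in>#M. Mb)" by (rule sum_mset_mono) (rule Mb)
    finally show ?thesis by simp
  qed
  have Pb: "norm (P n X) \<le> 2 * real N * Mb" if "n \<ge> N0" for n X
  proof -
    have "norm (P n X) \<le> norm (\<Sum>p\<in>#C. Gp lg s \<eta> (X - e p)) + norm (\<Sum>p\<in>#Cs n. Gp lg s \<eta> (X - e p))"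
      unfolding P_def by (rule norm_triangle_ineq4)
    also have "\<dots> \<le> real N * Mb + real N * Mb"
      using normsum[where M=C and X=X] normsum[where M="Cs n" and X=X] N0[OF that]
      by (intro add_mono) (auto simp: N_def)
    finally show ?thesis by (simp add: mult.commute mult.left_commute)
  qed
  have unn: "u n X \<ge> 0" for n X using wnn by (simp add: u_def)
  have Pconv: "(\<lambda>n. P n X) \<longlonglongrightarrow> 0" if X: "\<forall>p\<in>Q. X - e p \<noteq> 0 \<and> norm (X - e p) \<noteq> \<eta>" for X
  proof -
    have "(\<lambda>n. \<Sum>p\<in>#Cs n. Gp lg s \<eta> (X - e p)) \<longlonglongrightarrow> (\<Sum>p\<in>#C. Gp lg s \<eta> (X - e p))"
    proof (rule weak_isCont[of "cube R"])
      show "(\<lambda>n. \<Sum>p\<in>#Cs n. \<phi> p) \<longlonglongrightarrow> (\<Sum>p\<in>#C. \<phi> p)" if "continuous_on (cube R) \<phi>" for \<phi> :: "'a \<Rightarrow> real"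
        using weak[OF that] .
      fix q assume q: "q \<in># C"
      have ce: "isCont e q" using econt by (simp add: continuous_on_eq_continuous_at)
      have "norm (X - e q) \<noteq> \<eta>" using X q by (auto simp: Q_def)
      then have "isCont (Gp lg s \<eta>) (X - e q)" by (rule isCont_Gp[OF _ eta])
      then show "isCont (\<lambda>p. Gp lg s \<eta> (X - e p)) q"
        using isCont_o2[where f="\<lambda>p. X - e p" and g="Gp lg s \<eta>" and a=q] ce
        by (auto intro: continuous_intros)
    qed
    from tendsto_diff[OF tendsto_const this, of "\<Sum>p\<in>#C. Gp lg s \<eta> (X - e p)"]
    show ?thesis by (simp add: P_def[abs_def])
  qed
  define W where "W X = indicator D X * w X * (2 * real N * Mb)\<^sup>2" for X
  have Wm: "W \<in> borel_measurable borel" unfolding W_def[abs_def]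
    by (intro borel_measurable_times borel_measurable_indicator D w borel_measurable_const)
  have Wfin: "(\<integral>\<^sup>+ X. ennreal (W X) \<partial>lborel) < \<infinity>"
  proof -
    have "(\<integral>\<^sup>+ X. ennreal (W X) \<partial>lborel) = (\<integral>\<^sup>+ X. ennreal ((2 * real N * Mb)\<^sup>2) * (indicator D X * ennreal (w X)) \<partial>lborel)"
      by (intro nn_integral_cong) (auto simp: W_def ennreal_mult' wnn mult.commute split: split_indicator)
    also have "\<dots> = ennreal ((2 * real N * Mb)\<^sup>2) * (\<integral>\<^sup>+ X. indicator D X * ennreal (w X) \<partial>lborel)"
      by (rule nn_integral_cmult) (rule wDm)
    also have "\<dots> < \<infinity>" using wfin ennreal_mult_less_top[of "ennreal ((2 * real N * Mb)\<^sup>2)" "\<integral>\<^sup>+ X. indicator D X * ennreal (w X) \<partial>lborel"] by simp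
    finally show ?thesis .
  qed
  have DC: "(\<lambda>i. \<integral>\<^sup>+ X. ennreal (norm ((\<lambda>X. 0::real) X - u (i + N0) X)) \<partial>lborel) \<longlonglongrightarrow> 0"
  proof (rule nn_integral_dominated_convergence_norm[where w=W])
    show "(\<lambda>X. u (i + N0) X) \<in> borel_measurable lborel" for i unfolding measurable_lborel2 by (rule umeas)
    show "(\<lambda>X. 0::real) \<in> borel_measurable lborel" by (rule borel_measurable_const)
    show "W \<in> borel_measurable lborel" unfolding measurable_lborel2 by (rule Wm)
    show "(\<integral>\<^sup>+ X. ennreal (W X) \<partial>lborel) < \<infinity>" by (rule Wfin)
    show "AE X in lborel. norm (u (j + N0) X) \<le> W X" for j
    proof (intro AE_I2)
      fix X
      have "(norm (P (j + N0) X))\<^sup>2 \<le> (2 * real N * Mb)\<^sup>2"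
        by (intro power_mono Pb) auto
      moreover have "indicator D X * w X \<ge> 0" using wnn[of X] by simp
      ultimately have "indicator D X * w X * (norm (P (j + N0) X))\<^sup>2 \<le> indicator D X * w X * (2 * real N * Mb)\<^sup>2"
        by (rule mult_left_mono)
      then show "norm (u (j + N0) X) \<le> W X" using unn[of "j + N0" X]
        by (simp add: u_def W_def)
    qed
    show "AE X in lborel. (\<lambda>i. u (i + N0) X) \<longlonglongrightarrow> 0"
      using AEQ
    proof eventually_elim
      case (elim X)
      have "(\<lambda>n. u n X) \<longlonglongrightarrow> indicator D X * w X * (norm (0::'b))\<^sup>2"
        unfolding u_def by (intro tendsto_mult tendsto_const tendsto_power tendsto_norm Pconv elim)
      then show ?case by (intro LIMSEQ_ignore_initial_segment) simp
    qed
  qed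
  have A: "(\<lambda>n. \<integral>\<^sup>+ X. ennreal (u n X) \<partial>lborel) \<longlonglongrightarrow> 0"
  proof (rule LIMSEQ_offset[where k=N0])
    have "(\<integral>\<^sup>+ X. ennreal (norm ((\<lambda>X. 0::real) X - u (i + N0) X)) \<partial>lborel) = (\<integral>\<^sup>+ X. ennreal (u (i + N0) X) \<partial>lborel)" for i
      by (intro nn_integral_cong) (simp add: unn)
    then show "(\<lambda>i. \<integral>\<^sup>+ X. ennreal (u (i + N0) X) \<partial>lborel) \<longlonglongrightarrow> 0" using DC by simp
  qed
  obtain Kp where Kp: "(\<integral>\<^sup>+ X. indicator D X * ennreal (w X * (\<Phi> X)\<^sup>2) \<partial>lborel) = ennreal Kp" "Kp \<ge> 0"
    using Phifin by (cases "(\<integral>\<^sup>+ X. indicator D X * ennreal (w X * (\<Phi> X)\<^sup>2) \<partial>lborel)") auto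
  have Cb: "(\<integral>\<^sup>+ X. indicator D X * ennreal (w X * (norm (Efield lg s R \<eta> e C (Cs n) \<mu> (\<mu>s n) X))\<^sup>2) \<partial>lebesgue)
      \<le> 2 * (\<integral>\<^sup>+ X. ennreal (u n X) \<partial>lborel) + ennreal (2 * \<epsilon>\<^sup>2 * Kp)"
    if \<epsilon>: "\<epsilon> > 0" and aen: "AE x in lebesgue. x \<in> cube R \<longrightarrow> \<bar>\<mu>s n x - \<mu> x\<bar> \<le> \<epsilon>" for \<epsilon> n
  proof -
    define V where "V X = indicator D X * (w X * (\<Phi> X)\<^sup>2)" for X
    have Vm: "V \<in> borel_measurable borel" unfolding V_def[abs_def]
      by (intro borel_measurable_times borel_measurable_indicator D w Phi borel_measurable_power)
    have Vnn: "V X \<ge> 0" for X using wnn[of X] by (simp add: V_def)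
    have um2: "(\<lambda>X. ennreal (u n X)) \<in> borel_measurable lborel"
      unfolding measurable_lborel2 by (rule measurable_compose[OF umeas measurable_ennreal])
    have Vm2: "(\<lambda>X. ennreal (V X)) \<in> borel_measurable lborel"
      unfolding measurable_lborel2 by (rule measurable_compose[OF Vm measurable_ennreal])
    have pw: "indicator D X * ennreal (w X * (norm (Efield lg s R \<eta> e C (Cs n) \<mu> (\<mu>s n) X))\<^sup>2)
        \<le> ennreal (2 * u n X + 2 * \<epsilon>\<^sup>2 * V X)"
      if XQ: "\<forall>p\<in>Q. X - e p \<noteq> 0 \<and> norm (X - e p) \<noteq> \<eta>"
        and XF: "X \<in> D \<longrightarrow> (\<forall>c\<ge>0. (\<integral>\<^sup>+ x. ennreal (c * (indicator (cube R) x * norm (vgrad (gker lg s) (X - e x)))) \<partial>lebesgue) \<le> ennreal (c * \<Phi> X))"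
      for X
    proof (cases "X \<in> D")
      case False
      then show ?thesis by simp
    next
      case True
      define L where "L = (LINT x : cube R | lebesgue. (\<mu> x - \<mu>s n x) *\<^sub>R vgrad (gker lg s) (X - e x))"
      have sumeq: "(\<Sum>p\<in>#M. vgrad (gtrunc lg s \<eta>) (X - e p)) = (\<Sum>p\<in>#M. Gp lg s \<eta> (X - e p))"
        if "set_mset M \<subseteq> Q" for M
        by (rule arg_cong[where f=sum_mset], rule image_mset_cong, rule vgrad_gtrunc_Gp[OF mono eta])
           (use that XQ in auto)
      have QC: "set_mset C \<subseteq> Q" and QCs: "set_mset (Cs n) \<subseteq> Q" by (auto simp: Q_def)
      have Eeq: "Efield lg s R \<eta> e C (Cs n) \<mu> (\<mu>s n) X = P n X - L"
        unfolding Efield_def L_def P_def using sumeq[OF QC] sumeq[OF QCs] by simp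
      have Lb: "norm L \<le> \<epsilon> * \<Phi> X"
        unfolding L_def
        by (rule LINT_bound[OF aen]) (use \<epsilon> Phinn XF True in auto)
      have "norm (Efield lg s R \<eta> e C (Cs n) \<mu> (\<mu>s n) X) \<le> norm (P n X) + \<epsilon> * \<Phi> X"
        unfolding Eeq using norm_triangle_ineq4[of "P n X" L] Lb by linarith
      then have "(norm (Efield lg s R \<eta> e C (Cs n) \<mu> (\<mu>s n) X))\<^sup>2 \<le> (norm (P n X) + \<epsilon> * \<Phi> X)\<^sup>2"
        by (intro power_mono) auto
      also have "\<dots> \<le> 2 * (norm (P n X))\<^sup>2 + 2 * (\<epsilon> * \<Phi> X)\<^sup>2" by (rule sq_sum_le)
      finally have "w X * (norm (Efield lg s R \<eta> e C (Cs n) \<mu> (\<mu>s n) X))\<^sup>2 \<le> w X * (2 * (norm (P n X))\<^sup>2 + 2 * (\<epsilon> * \<Phi> X)\<^sup>2)"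
        by (rule mult_left_mono) (rule wnn)
      also have "\<dots> = 2 * u n X + 2 * \<epsilon>\<^sup>2 * V X"
        using True by (simp add: u_def V_def algebra_simps power_mult_distrib)
      finally show ?thesis using True by (simp add: ennreal_leI)
    qed
    have "(\<integral>\<^sup>+ X. indicator D X * ennreal (w X * (norm (Efield lg s R \<eta> e C (Cs n) \<mu> (\<mu>s n) X))\<^sup>2) \<partial>lebesgue)
        = (\<integral>\<^sup>+ X. indicator D X * ennreal (w X * (norm (Efield lg s R \<eta> e C (Cs n) \<mu> (\<mu>s n) X))\<^sup>2) \<partial>lborel)"
      by (rule nn_integral_completion)
    also have "\<dots> \<le> (\<integral>\<^sup>+ X. ennreal (2 * u n X + 2 * \<epsilon>\<^sup>2 * V X) \<partial>lborel)"
    proof (rule nn_integral_mono_AE)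
      show "AE X in lborel. indicator D X * ennreal (w X * (norm (Efield lg s R \<eta> e C (Cs n) \<mu> (\<mu>s n) X))\<^sup>2)
        \<le> ennreal (2 * u n X + 2 * \<epsilon>\<^sup>2 * V X)"
        using AEQ Fbound by eventually_elim (rule pw)
    qed
    also have "\<dots> = (\<integral>\<^sup>+ X. ennreal 2 * ennreal (u n X) + ennreal (2 * \<epsilon>\<^sup>2) * ennreal (V X) \<partial>lborel)"
    proof (intro nn_integral_cong)
      fix X
      have "ennreal (2 * u n X + 2 * \<epsilon>\<^sup>2 * V X) = ennreal (2 * u n X) + ennreal (2 * \<epsilon>\<^sup>2 * V X)"
        by (rule ennreal_plus) (auto simp: unn Vnn)
      also have "\<dots> = ennreal 2 * ennreal (u n X) + ennreal (2 * \<epsilon>\<^sup>2) * ennreal (V X)"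
        by (simp add: ennreal_mult' Vnn)
      finally show "ennreal (2 * u n X + 2 * \<epsilon>\<^sup>2 * V X) = ennreal 2 * ennreal (u n X) + ennreal (2 * \<epsilon>\<^sup>2) * ennreal (V X)" .
    qed
    also have "\<dots> = (\<integral>\<^sup>+ X. ennreal 2 * ennreal (u n X) \<partial>lborel) + (\<integral>\<^sup>+ X. ennreal (2 * \<epsilon>\<^sup>2) * ennreal (V X) \<partial>lborel)"
      by (rule nn_integral_add) (intro borel_measurable_times_ennreal borel_measurable_const um2 Vm2)+
    also have "\<dots> = 2 * (\<integral>\<^sup>+ X. ennreal (u n X) \<partial>lborel) + ennreal (2 * \<epsilon>\<^sup>2) * (\<integral>\<^sup>+ X. ennreal (V X) \<partial>lborel)"
      by (simp add: nn_integral_cmult[OF um2] nn_integral_cmult[OF Vm2])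
    also have "(\<integral>\<^sup>+ X. ennreal (V X) \<partial>lborel) = ennreal Kp"
      unfolding Kp(1)[symmetric] V_def
      by (intro nn_integral_cong) (simp add: ennreal_mult' wnn split: split_indicator)
    also have "ennreal (2 * \<epsilon>\<^sup>2) * ennreal Kp = ennreal (2 * \<epsilon>\<^sup>2 * Kp)"
      using Kp(2) by (simp add: ennreal_mult[symmetric])
    finally show ?thesis .
  qed
  show ?thesis
  proof (rule ennreal_tendsto_0I)
    fix r :: real assume r: "r > 0"
    define \<epsilon> where "\<epsilon> = sqrt (r / (4 * (Kp + 1)))"
    have \<epsilon>: "\<epsilon> > 0" using r Kp by (simp add: \<epsilon>_def)
    have e2: "\<epsilon>\<^sup>2 = r / (4 * (Kp + 1))" using r Kp by (simp add: \<epsilon>_def)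
    have "2 * \<epsilon>\<^sup>2 * Kp \<le> r / 2"
    proof -
      have "2 * \<epsilon>\<^sup>2 * Kp = r / 2 * (Kp / (Kp + 1))" using e2 Kp(2) by (simp add: field_simps)
      also have "\<dots> \<le> r / 2 * 1" using r Kp by (intro mult_left_mono) auto
      finally show ?thesis by simp
    qed
    have ev: "eventually (\<lambda>n. (\<integral>\<^sup>+ X. ennreal (u n X) \<partial>lborel) < ennreal (r / 4)) sequentially"
      using A r by (intro order_tendstoD(2)) auto
    show "eventually (\<lambda>n. (\<integral>\<^sup>+ X. indicator D X * ennreal (w X * (norm (Efield lg s R \<eta> e C (Cs n) \<mu> (\<mu>s n) X))\<^sup>2) \<partial>lebesgue) \<le> ennreal r) sequentially"
      using ev Linf[OF \<epsilon>]
    proof eventually_elim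
      case (elim n)
      have "2 * (\<integral>\<^sup>+ X. ennreal (u n X) \<partial>lborel) \<le> 2 * ennreal (r / 4)"
        using elim(1) by (intro mult_left_mono) auto
      also have "\<dots> = ennreal 2 * ennreal (r / 4)" by simp
      also have "\<dots> = ennreal (r / 2)" using r by (subst ennreal_mult[symmetric]) auto
      finally have "2 * (\<integral>\<^sup>+ X. ennreal (u n X) \<partial>lborel) + ennreal (2 * \<epsilon>\<^sup>2 * Kp) \<le> ennreal (r / 2) + ennreal (r / 2)"
        using \<open>2 * \<epsilon>\<^sup>2 * Kp \<le> r / 2\<close> by (intro add_mono) (auto intro: ennreal_leI)
      also have "\<dots> = ennreal r" using r by (simp add: ennreal_plus[symmetric])
      finally show ?case using Cb[OF \<epsilon> elim(2)] by (rule order_trans[rotated])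
    qed
  qed
qed


lemma prod_powr_const:
  assumes "finite B" "r > 0"
  shows "(\<Prod>b\<in>B. r powr (-p)) = r powr (- (real (card B) * p))"
  using assms by (induction B rule: finite_induct) (auto simp: powr_add[symmetric] algebra_simps)

lemma prod_part:
  assumes B: "finite B" and r: "r > 0" and u: "\<And>b. b \<in> B \<Longrightarrow> 0 < u b \<and> u b \<le> r" and p: "p \<ge> 0"
  shows "r powr (- (real (card B) * p)) \<le> (\<Prod>b\<in>B. u b powr (-p))"
proof -
  have "r powr (- (real (card B) * p)) = (\<Prod>b\<in>B. r powr (-p))" by (rule prod_powr_const[OF B r, symmetric])
  also have "\<dots> \<le> (\<Prod>b\<in>B. u b powr (-p))"
    by (rule prod_mono) (use u p in \<open>auto intro!: powr_mono2'\<close>)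
  finally show ?thesis .
qed

lemma AE_coords_nonzero:
  fixes X1 :: "'a::euclidean_space"
  shows "AE x in lebesgue. \<forall>b\<in>Basis. (X1 - x) \<bullet> b \<noteq> 0"
proof (rule AE_finite_allI[OF finite_Basis])
  fix b :: 'a assume b: "b \<in> Basis"
  have "{x. x \<bullet> b = X1 \<bullet> b} \<in> null_sets lebesgue"
    using negligible_standard_hyperplane[OF b, of "X1 \<bullet> b"] by (simp add: negligible_iff_null_sets)
  then show "AE x in lebesgue. (X1 - x) \<bullet> b \<noteq> 0"
    by (rule AE_not_in[THEN eventually_mono]) (auto simp: inner_diff_left)
qed

lemma prodmeas:
  fixes X1 :: "'a::euclidean_space"
  shows "(\<lambda>x. indicator (cube R) x * ennreal (\<Prod>b\<in>Basis. \<bar>(X1 - x) \<bullet> b\<bar> powr (-p))) \<in> borel_measurable lborel"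
  unfolding cube_def by measurable

lemma F_generic:
  fixes X1 :: "'a::euclidean_space" and Z :: "'a \<Rightarrow> 'b::euclidean_space"
  assumes X1: "X1 \<in> cube R" and c: "c \<ge> 0" and A: "A \<ge> 0"
    and pw: "\<And>x. \<forall>b\<in>Basis. (X1 - x) \<bullet> b \<noteq> 0 \<Longrightarrow> norm (vgrad (gker lg s) (Z x)) \<le> A * (\<Prod>b\<in>Basis. \<bar>(X1 - x) \<bullet> b\<bar> powr (-p))"
    and K1: "(\<integral>\<^sup>+ t. indicator {-R..R} t * ennreal (\<bar>t::real\<bar> powr (-p)) \<partial>lborel) = ennreal K1r" "K1r \<ge> 0"
  shows "(\<integral>\<^sup>+ x. ennreal (c * (indicator (cube R) x * norm (vgrad (gker lg s) (Z x)))) \<partial>lebesgue)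
      \<le> ennreal (c * (A * K1r ^ DIM('a)))"
proof -
  have "(\<integral>\<^sup>+ x. ennreal (c * (indicator (cube R) x * norm (vgrad (gker lg s) (Z x)))) \<partial>lebesgue)
     \<le> (\<integral>\<^sup>+ x. ennreal (c * A) * (indicator (cube R) x * ennreal (\<Prod>b\<in>Basis. \<bar>(X1 - x) \<bullet> b\<bar> powr (-p))) \<partial>lebesgue)"
  proof (rule nn_integral_mono_AE)
    show "AE x in lebesgue. ennreal (c * (indicator (cube R) x * norm (vgrad (gker lg s) (Z x))))
       \<le> ennreal (c * A) * (indicator (cube R) x * ennreal (\<Prod>b\<in>Basis. \<bar>(X1 - x) \<bullet> b\<bar> powr (-p)))"
      using AE_coords_nonzero[of X1]
    proof eventually_elim
      case (elim x)
      have "c * (indicator (cube R) x * norm (vgrad (gker lg s) (Z x)))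
          \<le> c * (indicator (cube R) x * (A * (\<Prod>b\<in>Basis. \<bar>(X1 - x) \<bullet> b\<bar> powr (-p))))"
        using pw[OF elim] c by (intro mult_left_mono) (auto simp: indicator_def)
      then have "ennreal (c * (indicator (cube R) x * norm (vgrad (gker lg s) (Z x))))
          \<le> ennreal (c * (indicator (cube R) x * (A * (\<Prod>b\<in>Basis. \<bar>(X1 - x) \<bullet> b\<bar> powr (-p)))))"
        by (rule ennreal_leI)
      also have "\<dots> = ennreal (c * A) * (indicator (cube R) x * ennreal (\<Prod>b\<in>Basis. \<bar>(X1 - x) \<bullet> b\<bar> powr (-p)))"
        using c A by (auto simp: indicator_def ennreal_mult[symmetric] prod_nonneg mult_ac)
      finally show ?case .
    qed
  qed
  also have "\<dots> = ennreal (c * A) * (\<integral>\<^sup>+ x. indicator (cube R) x * ennreal (\<Prod>b\<in>Basis. \<bar>(X1 - x) \<bullet> b\<bar> powr (-p)) \<partial>lborel)"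
    by (simp only: nn_integral_completion) (rule nn_integral_cmult[OF prodmeas])
  also have "\<dots> \<le> ennreal (c * A) * (ennreal K1r) ^ DIM('a)"
    using cube_prod_int[OF X1, of p] K1(1) by (intro mult_left_mono) auto
  also have "\<dots> = ennreal (c * (A * K1r ^ DIM('a)))"
    using c A K1(2) by (simp add: ennreal_power ennreal_mult[symmetric] mult_ac)
  finally show ?thesis .
qed


lemma cube_borel: "cube R \<in> sets (borel :: 'a::euclidean_space measure)"
  unfolding cube_def by simp

lemma cube_fin: "emeasure lborel (cube R :: 'a::euclidean_space set) < \<infinity>"
  unfolding cube_def by (rule emeasure_lborel_cbox_finite)

lemma norm_vgrad_gker:
  fixes Z :: "'b::real_inner"
  assumes "mono_ok lg s" "Z \<noteq> 0"
  shows "norm (vgrad (gker lg s) Z) = cc lg s * norm Z powr (- (s + 1))"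
  using assms by (simp add: vgrad_gker norm_gradK mono_ok_s mono_ok_def)

lemma cc_nn: "mono_ok lg s \<Longrightarrow> cc lg s \<ge> 0" by (auto simp: cc_def mono_ok_def)

lemma ind_const: assumes cl: "A \<in> sets (lborel::'a::euclidean_space measure)"
  shows "(\<integral>\<^sup>+ X. indicator A X * ennreal (1 * c) \<partial>lborel) = ennreal c * emeasure lborel A"
proof -
  have "(\<integral>\<^sup>+ X. indicator A X * ennreal (1 * c) \<partial>lborel) = (\<integral>\<^sup>+ X. ennreal c * indicator A X \<partial>lborel)"
    by (rule nn_integral_cong) (simp add: mult.commute)
  also have "\<dots> = ennreal c * emeasure lborel A" using cl by (rule nn_integral_cmult_indicator)
  finally show ?thesis .
qed

lemma case0:
  fixes C :: "'a::euclidean_space multiset" and \<mu> :: "'a \<Rightarrow> real"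
    and Cs :: "nat \<Rightarrow> 'a multiset" and \<mu>s :: "nat \<Rightarrow> 'a \<Rightarrow> real"
  assumes mono: "mono_ok lg s" and sd: "s + 1 < real DIM('a)" and R: "R > 0" and eta: "0 < \<eta>"
    and weak: "\<And>\<phi> :: 'a \<Rightarrow> real. continuous_on (cube R) \<phi> \<Longrightarrow>
                 (\<lambda>n. \<Sum>p\<in>#Cs n. \<phi> p) \<longlonglongrightarrow> (\<Sum>p\<in>#C. \<phi> p)"
    and Linf: "\<And>e. e > 0 \<Longrightarrow>
                 eventually (\<lambda>n. AE x in lebesgue. x \<in> cube R \<longrightarrow> \<bar>\<mu>s n x - \<mu> x\<bar> \<le> e) sequentially"
  shows "(\<lambda>n. \<integral>\<^sup>+ X. indicator (cube R) X * ennreal ((norm (Efield lg s R \<eta> (\<lambda>x. x) C (Cs n) \<mu> (\<mu>s n) X))\<^sup>2) \<partial>lebesgue) \<longlonglongrightarrow> 0"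
proof -
  define d where "d = real DIM('a)"
  define p where "p = (s + 1) / d"
  have s0: "s \<ge> 0" using mono_ok_s[OF mono] .
  have d0: "d > 0" by (simp add: d_def)
  have p: "p \<ge> 0" "p < 1" using s0 sd d0 by (auto simp: p_def d_def field_simps)
  have dp: "real (card (Basis :: 'a set)) * p = s + 1" using d0 by (simp add: p_def d_def)
  obtain K1r where K1: "(\<integral>\<^sup>+ t. indicator {-R..R} t * ennreal (\<bar>t::real\<bar> powr (-p)) \<partial>lborel) = ennreal K1r" "K1r \<ge> 0"
    using nn_abs_powr_finite[of "-p" R] p R
    by (cases "(\<integral>\<^sup>+ t. indicator {-R..R} t * ennreal (\<bar>t::real\<bar> powr (-p)) \<partial>lborel)") auto
  define \<Phi>c where "\<Phi>c = cc lg s * K1r ^ DIM('a)"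
  have \<Phi>c: "\<Phi>c \<ge> 0" using cc_nn[OF mono] K1(2) by (simp add: \<Phi>c_def)
  have main: "(\<lambda>n. \<integral>\<^sup>+ X. indicator (cube R) X * ennreal ((\<lambda>_. 1) X * (norm (Efield lg s R \<eta> (\<lambda>x. x) C (Cs n) \<mu> (\<mu>s n) X))\<^sup>2) \<partial>lebesgue) \<longlonglongrightarrow> 0"
  proof (rule core[where \<Phi>="\<lambda>_. \<Phi>c"])
    show "mono_ok lg s" by (rule mono)
    show "0 < \<eta>" by (rule eta)
    show "continuous_on UNIV (\<lambda>x::'a. x)" by (rule continuous_on_id)
    show "(\<lambda>x::'a. x) \<in> borel_measurable borel" by simp
    show "cube R \<in> sets borel" by (rule cube_borel)
    show "(\<lambda>_. 1::real) \<in> borel_measurable borel" by simp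
    show "\<And>X. (1::real) \<ge> 0" by simp
    show "(\<integral>\<^sup>+ X. indicator (cube R :: 'a set) X * ennreal 1 \<partial>lborel) < \<infinity>"
    proof -
      have cl: "cube R \<in> sets lborel" using cube_borel[of R] by simp
      show ?thesis using cube_fin[of R] by (simp add: nn_integral_indicator[OF cl])
    qed
    show "(\<lambda>_. \<Phi>c) \<in> borel_measurable borel" by simp
    show "\<And>X. \<Phi>c \<ge> 0" by (rule \<Phi>c)
    have "(\<integral>\<^sup>+ X. indicator (cube R :: 'a set) X * ennreal (1 * \<Phi>c\<^sup>2) \<partial>lborel) = ennreal (\<Phi>c\<^sup>2) * emeasure lborel (cube R :: 'a set)"
      by (rule ind_const) (use cube_borel[of R] in simp)
    also have "\<dots> < \<infinity>" using cube_fin[of R, where 'a='a] ennreal_mult_less_top[of "ennreal (\<Phi>c\<^sup>2)" "emeasure lborel (cube R :: 'a set)"] by simp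
    finally show "(\<integral>\<^sup>+ X. indicator (cube R :: 'a set) X * ennreal (1 * \<Phi>c\<^sup>2) \<partial>lborel) < \<infinity>" .
    show "AE X in lborel. X \<in> (cube R :: 'a set) \<longrightarrow> (\<forall>c\<ge>0. (\<integral>\<^sup>+ x. ennreal (c * (indicator (cube R) x * norm (vgrad (gker lg s) (X - x)))) \<partial>lebesgue) \<le> ennreal (c * \<Phi>c))"
    proof (intro AE_I2 impI allI)
      fix X :: 'a and c :: real assume X: "X \<in> cube R" and c: "c \<ge> 0"
      show "(\<integral>\<^sup>+ x. ennreal (c * (indicator (cube R) x * norm (vgrad (gker lg s) (X - x)))) \<partial>lebesgue) \<le> ennreal (c * \<Phi>c)"
      proof -
        have pwf: "norm (vgrad (gker lg s) (X - x)) \<le> cc lg s * (\<Prod>b\<in>Basis. \<bar>(X - x) \<bullet> b\<bar> powr (-p))"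
          if nz: "\<forall>b\<in>Basis. (X - x) \<bullet> b \<noteq> 0" for x
        proof -
        have Z: "X - x \<noteq> 0" using nz SOME_Basis by force
        have "norm (X - x) powr (- (s + 1)) \<le> (\<Prod>b\<in>Basis. \<bar>(X - x) \<bullet> b\<bar> powr (-p))"
          using prod_part[OF finite_Basis, of "norm (X - x)" "\<lambda>b. \<bar>(X - x) \<bullet> b\<bar>" p] Z nz p(1) dp
          by (auto simp: Basis_le_norm)
        then show "norm (vgrad (gker lg s) (X - x)) \<le> cc lg s * (\<Prod>b\<in>Basis. \<bar>(X - x) \<bullet> b\<bar> powr (-p))"
          using norm_vgrad_gker[OF mono Z] cc_nn[OF mono] by (auto intro: mult_left_mono)
        qed
        show ?thesis unfolding \<Phi>c_def by (rule F_generic[OF X c cc_nn[OF mono] pwf K1])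
      qed
    qed
  qed (fact weak Linf)+
  then show ?thesis by simp
qed


lemma D1_borel: "(cube R \<times> {-R..R} :: ('a::euclidean_space \<times> real) set) \<in> sets borel"
  by (intro borel_closed closed_Times) (auto simp: cube_def)

lemma snd_pow_meas: "(\<lambda>X::('a::euclidean_space \<times> real). Cst * \<bar>snd X\<bar> powr a) \<in> borel_measurable borel"
proof -
  have "(\<lambda>t::real. Cst * \<bar>t\<bar> powr a) \<in> borel_measurable borel" by measurable
  moreover have "(snd :: ('a \<times> real) \<Rightarrow> real) \<in> borel_measurable borel"
    by (intro borel_measurable_continuous_onI continuous_intros)
  ultimately show ?thesis by (rule measurable_compose[rotated])
qed

lemma prodfin:
  assumes a: "a > -1" and R: "R \<ge> 0" and Cst: "Cst \<ge> 0"
  shows "(\<integral>\<^sup>+ X. indicator (cube R \<times> {-R..R}) X * ennreal (Cst * \<bar>snd X\<bar> powr a) \<partial>(lborel :: ('a::euclidean_space \<times> real) measure)) < \<infinity>"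
proof -
  define f where "f X = indicator (cube R \<times> {-R..R}) X * ennreal (Cst * \<bar>snd X\<bar> powr a)" for X :: "'a \<times> real"
  obtain J where J: "(\<integral>\<^sup>+ t. indicator {-R..R} t * ennreal (\<bar>t::real\<bar> powr a) \<partial>lborel) = ennreal J" "J \<ge> 0"
    using nn_abs_powr_finite[OF a R]
    by (cases "(\<integral>\<^sup>+ t. indicator {-R..R} t * ennreal (\<bar>t::real\<bar> powr a) \<partial>lborel)") auto
  have fm: "f \<in> borel_measurable (lborel \<Otimes>\<^sub>M lborel)"
  proof -
    have "f \<in> borel_measurable borel" unfolding f_def[abs_def]
      by (intro borel_measurable_times_ennreal borel_measurable_indicator D1_borel
          measurable_compose[OF snd_pow_meas measurable_ennreal])
    then show ?thesis by (simp add: lborel_prod)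
  qed
  have "(\<integral>\<^sup>+ X. f X \<partial>lborel) = (\<integral>\<^sup>+ X. f X \<partial>(lborel \<Otimes>\<^sub>M lborel))" by (simp add: lborel_prod)
  also have "\<dots> = (\<integral>\<^sup>+ x. \<integral>\<^sup>+ y. f (x, y) \<partial>lborel \<partial>lborel)"
    by (rule lborel.nn_integral_fst[OF fm, symmetric])
  also have "\<dots> = (\<integral>\<^sup>+ x. ennreal (Cst * J) * indicator (cube R :: 'a set) x \<partial>lborel)"
  proof (rule nn_integral_cong)
    fix x :: 'a
    have "(\<integral>\<^sup>+ y. f (x, y) \<partial>lborel) = (\<integral>\<^sup>+ y. (indicator (cube R) x * ennreal Cst) * (indicator {-R..R} y * ennreal (\<bar>y\<bar> powr a)) \<partial>lborel)"
      by (intro nn_integral_cong) (auto simp: f_def indicator_times ennreal_mult Cst split: split_indicator)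
    also have "\<dots> = (indicator (cube R) x * ennreal Cst) * (\<integral>\<^sup>+ y. indicator {-R..R} y * ennreal (\<bar>y\<bar> powr a) \<partial>lborel)"
      by (rule nn_integral_cmult) measurable
    also have "\<dots> = ennreal (Cst * J) * indicator (cube R) x"
      using J Cst by (simp add: ennreal_mult mult_ac)
    finally show "(\<integral>\<^sup>+ y. f (x, y) \<partial>lborel) = ennreal (Cst * J) * indicator (cube R) x" .
  qed
  also have "\<dots> = ennreal (Cst * J) * emeasure lborel (cube R :: 'a set)"
    by (rule nn_integral_cmult_indicator) (use cube_borel[of R] in simp)
  also have "\<dots> < \<infinity>"
    using cube_fin[of R, where 'a='a] ennreal_mult_less_top[of "ennreal (Cst * J)" "emeasure lborel (cube R :: 'a set)"] by simp
  finally show ?thesis unfolding f_def .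
qed


lemma AE_snd_nonzero: "AE X in (lborel :: ('a::euclidean_space \<times> real) measure). snd X \<noteq> 0"
proof -
  have b: "((0::'a), (1::real)) \<in> Basis" by (simp add: Basis_prod_def)
  have "{X :: 'a \<times> real. X \<bullet> (0, 1) = 0} \<in> null_sets lebesgue"
    using negligible_standard_hyperplane[OF b, of 0] by (simp add: negligible_iff_null_sets)
  then obtain N' where N': "N' \<in> null_sets lborel" "{X :: 'a \<times> real. X \<bullet> (0, 1) = 0} \<subseteq> N'"
    unfolding null_sets_completion_iff2 by blast
  show ?thesis
    using AE_not_in[OF N'(1)] by eventually_elim (use N'(2) in \<open>auto simp: inner_prod_def\<close>)
qed

lemma case1_params:
  fixes s d :: real
  assumes d: "d > 0" and s0: "s \<ge> 0" and s1: "d - 2 < s" and s2: "s < d"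
  defines "p \<equiv> ((s + d) / (2 * d) + min 1 ((s + 1) / d)) / 2"
  shows "0 \<le> p" "p < 1" "0 \<le> s + 1 - d * p" "(s - d + 1) - 2 * (s + 1 - d * p) > -1"
proof -
  define m where "m = min 1 ((s + 1) / d)"
  define lo where "lo = (s + d) / (2 * d)"
  have lo0: "lo \<ge> 0" using d s0 by (simp add: lo_def)
  have m0: "m > 0" using d s0 by (simp add: m_def)
  have lo1: "lo < 1" using d s2 by (simp add: lo_def field_simps)
  have "d * d < d * (s + 2)" using d s1 by (intro mult_strict_left_mono) auto
  then have lo2: "lo < (s + 1) / d" using d s1 by (simp add: lo_def field_simps)
  have lom: "lo < m" using lo1 lo2 by (simp add: m_def)
  have pdef: "p = (lo + m) / 2" by (simp add: p_def lo_def m_def)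
  have pm: "p < m" "lo < p" using lom by (auto simp: pdef)
  show "0 \<le> p" using lo0 m0 by (simp add: pdef)
  show "p < 1" using pm by (simp add: m_def)
  have "p < (s + 1) / d" using pm by (simp add: m_def)
  then have "d * p < s + 1" using d by (simp add: field_simps)
  then show "0 \<le> s + 1 - d * p" by simp
  have "lo * (2 * d) = s + d" using d by (simp add: lo_def)
  then have "2 * d * p > s + d" using pm(2) d by (smt (verit, best) mult.commute mult_strict_left_mono)
  then show "(s - d + 1) - 2 * (s + 1 - d * p) > -1" by (simp add: algebra_simps)
qed

lemma case1:
  fixes C :: "'a::euclidean_space multiset" and \<mu> :: "'a \<Rightarrow> real"
    and Cs :: "nat \<Rightarrow> 'a multiset" and \<mu>s :: "nat \<Rightarrow> 'a \<Rightarrow> real"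
  assumes mono: "mono_ok lg s" and s1: "real DIM('a) - 2 < s" and s2: "s < real DIM('a)"
    and R: "R > 0" and eta: "0 < \<eta>"
    and weak: "\<And>\<phi> :: 'a \<Rightarrow> real. continuous_on (cube R) \<phi> \<Longrightarrow>
                 (\<lambda>n. \<Sum>p\<in>#Cs n. \<phi> p) \<longlonglongrightarrow> (\<Sum>p\<in>#C. \<phi> p)"
    and Linf: "\<And>e. e > 0 \<Longrightarrow>
                 eventually (\<lambda>n. AE x in lebesgue. x \<in> cube R \<longrightarrow> \<bar>\<mu>s n x - \<mu> x\<bar> \<le> e) sequentially"
  shows "(\<lambda>n. \<integral>\<^sup>+ X. indicator (cube R \<times> {-R..R}) X * ennreal (\<bar>snd X\<bar> powr (s - real DIM('a) + 1)
            * (norm (Efield lg s R \<eta> (\<lambda>x. (x, 0::real)) C (Cs n) \<mu> (\<mu>s n) X))\<^sup>2) \<partial>lebesgue) \<longlonglongrightarrow> 0"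
proof -
  define d where "d = real DIM('a)"
  define p where "p = ((s + d) / (2 * d) + min 1 ((s + 1) / d)) / 2"
  define q where "q = s + 1 - d * p"
  define \<gamma> where "\<gamma> = s - d + 1"
  have s0: "s \<ge> 0" using mono_ok_s[OF mono] .
  have d0: "d > 0" by (simp add: d_def)
  note prm = case1_params[OF d0 s0 s1[folded d_def] s2[folded d_def], folded p_def]
  have p: "0 \<le> p" "p < 1" using prm by auto
  have q: "q \<ge> 0" using prm by (simp add: q_def)
  have gq: "\<gamma> - 2 * q > -1" using prm by (simp add: q_def \<gamma>_def)
  have g: "\<gamma> > -1" using gq q by simp
  have dp: "q + real (card (Basis :: 'a set)) * p = s + 1" by (simp add: q_def d_def)
  obtain K1r where K1: "(\<integral>\<^sup>+ t. indicator {-R..R} t * ennreal (\<bar>t::real\<bar> powr (-p)) \<partial>lborel) = ennreal K1r" "K1r \<ge> 0"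
    using nn_abs_powr_finite[of "-p" R] p R
    by (cases "(\<integral>\<^sup>+ t. indicator {-R..R} t * ennreal (\<bar>t::real\<bar> powr (-p)) \<partial>lborel)") auto
  define K where "K = K1r ^ DIM('a)"
  have K: "K \<ge> 0" using K1(2) by (simp add: K_def)
  define \<Phi> where "\<Phi> X = cc lg s * \<bar>snd X\<bar> powr (-q) * K" for X :: "'a \<times> real"
  define D where "D = (cube R \<times> {-R..R} :: ('a \<times> real) set)"
  have main: "(\<lambda>n. \<integral>\<^sup>+ X. indicator D X * ennreal ((\<lambda>X. \<bar>snd X\<bar> powr \<gamma>) X
            * (norm (Efield lg s R \<eta> (\<lambda>x. (x, 0::real)) C (Cs n) \<mu> (\<mu>s n) X))\<^sup>2) \<partial>lebesgue) \<longlonglongrightarrow> 0"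
  proof (rule core[where \<Phi>=\<Phi>])
    show "mono_ok lg s" by (rule mono)
    show "0 < \<eta>" by (rule eta)
    show "continuous_on UNIV (\<lambda>x::'a. (x, 0::real))" by (intro continuous_intros)
    show "(\<lambda>x::'a. (x, 0::real)) \<in> borel_measurable borel"
      by (intro borel_measurable_continuous_onI continuous_intros)
    show "D \<in> sets borel" unfolding D_def by (rule D1_borel)
    show "(\<lambda>X::'a \<times> real. \<bar>snd X\<bar> powr \<gamma>) \<in> borel_measurable borel"
      using snd_pow_meas[of 1 \<gamma>, where 'a='a] by simp
    show "\<And>X::'a \<times> real. \<bar>snd X\<bar> powr \<gamma> \<ge> 0" by simp
    show "(\<integral>\<^sup>+ X. indicator D X * ennreal (\<bar>snd X\<bar> powr \<gamma>) \<partial>lborel) < \<infinity>"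
      using prodfin[OF g, of R 1, where 'a='a] R unfolding D_def by simp
    show "\<Phi> \<in> borel_measurable borel" unfolding \<Phi>_def[abs_def]
      by (intro borel_measurable_times snd_pow_meas[of "cc lg s" "-q", where 'a='a] borel_measurable_const)
    show "\<And>X. \<Phi> X \<ge> 0" using cc_nn[OF mono] K by (simp add: \<Phi>_def)
    have "(\<integral>\<^sup>+ X. indicator D X * ennreal (\<bar>snd X\<bar> powr \<gamma> * (\<Phi> X)\<^sup>2) \<partial>lborel)
        = (\<integral>\<^sup>+ X. indicator D X * ennreal ((cc lg s * K)\<^sup>2 * \<bar>snd X\<bar> powr (\<gamma> - 2 * q)) \<partial>lborel)"
    proof (intro nn_integral_cong)
      fix X :: "'a \<times> real"
      have "\<bar>snd X\<bar> powr \<gamma> * (\<Phi> X)\<^sup>2 = (cc lg s * K)\<^sup>2 * \<bar>snd X\<bar> powr (\<gamma> - 2 * q)"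
      proof (cases "snd X = 0")
        case False
        have "\<bar>snd X\<bar> powr \<gamma> * (\<bar>snd X\<bar> powr (-q))\<^sup>2 = \<bar>snd X\<bar> powr (\<gamma> - 2 * q)"
          using False by (simp add: power2_eq_square powr_add[symmetric])
        then show ?thesis unfolding \<Phi>_def by (simp add: power_mult_distrib algebra_simps)
      qed (simp add: \<Phi>_def)
      then show "indicator D X * ennreal (\<bar>snd X\<bar> powr \<gamma> * (\<Phi> X)\<^sup>2) = indicator D X * ennreal ((cc lg s * K)\<^sup>2 * \<bar>snd X\<bar> powr (\<gamma> - 2 * q))"
        by simp
    qed
    also have "\<dots> < \<infinity>" using prodfin[OF gq, of R "(cc lg s * K)\<^sup>2", where 'a='a] R unfolding D_def by simp
    finally show "(\<integral>\<^sup>+ X. indicator D X * ennreal (\<bar>snd X\<bar> powr \<gamma> * (\<Phi> X)\<^sup>2) \<partial>lborel) < \<infinity>" .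
    show "AE X in lborel. X \<in> D \<longrightarrow> (\<forall>c\<ge>0. (\<integral>\<^sup>+ x. ennreal (c * (indicator (cube R) x * norm (vgrad (gker lg s) (X - (x, 0::real))))) \<partial>lebesgue) \<le> ennreal (c * \<Phi> X))"
      using AE_snd_nonzero[where 'a='a]
    proof (eventually_elim, intro impI allI)
      fix X :: "'a \<times> real" and c :: real
      assume y0: "snd X \<noteq> 0" and XD: "X \<in> D" and c: "c \<ge> 0"
      obtain X1 y where X: "X = (X1, y)" by (cases X)
      have X1: "X1 \<in> cube R" using XD X by (simp add: D_def)
      have y: "y \<noteq> 0" using y0 X by simp
      have A: "cc lg s * \<bar>y\<bar> powr (-q) \<ge> 0" using cc_nn[OF mono] by simp
      have pwf: "norm (vgrad (gker lg s) (X - (x, 0))) \<le> (cc lg s * \<bar>y\<bar> powr (-q)) * (\<Prod>b\<in>Basis. \<bar>(X1 - x) \<bullet> b\<bar> powr (-p))"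
        if nz: "\<forall>b\<in>Basis. (X1 - x) \<bullet> b \<noteq> 0" for x
      proof -
        define r where "r = norm (X - (x, 0))"
        have Zeq: "X - (x, 0) = (X1 - x, y)" using X by simp
        have Z: "X - (x, 0) \<noteq> 0" using Zeq y by (simp add: zero_prod_def)
        have r0: "r > 0" using Z by (simp add: r_def)
        have ry: "\<bar>y\<bar> \<le> r" unfolding r_def Zeq using norm_snd_le[of y "X1 - x"] by simp
        have rb: "\<bar>(X1 - x) \<bullet> b\<bar> \<le> r" if "b \<in> Basis" for b
          unfolding r_def Zeq using Basis_le_norm[OF that, of "X1 - x"] norm_fst_le[of "X1 - x" y] by simp
        have "r powr (- (s + 1)) = r powr (-q) * r powr (- (real (card (Basis :: 'a set)) * p))"
        proof -
          have "- (s + 1) = -q + - (real (card (Basis :: 'a set)) * p)" using dp by simp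
          then show ?thesis by (simp only: powr_add[symmetric])
        qed
        also have "\<dots> \<le> \<bar>y\<bar> powr (-q) * (\<Prod>b\<in>Basis. \<bar>(X1 - x) \<bullet> b\<bar> powr (-p))"
        proof (rule mult_mono)
          show "r powr (-q) \<le> \<bar>y\<bar> powr (-q)" using q y ry by (intro powr_mono2') auto
          show "r powr (- (real (card (Basis :: 'a set)) * p)) \<le> (\<Prod>b\<in>Basis. \<bar>(X1 - x) \<bullet> b\<bar> powr (-p))"
            by (rule prod_part[OF finite_Basis r0 _ p(1)]) (use nz rb in auto)
        qed (auto intro: prod_nonneg)
        finally have "r powr (- (s + 1)) \<le> \<bar>y\<bar> powr (-q) * (\<Prod>b\<in>Basis. \<bar>(X1 - x) \<bullet> b\<bar> powr (-p))" .
        then have "cc lg s * r powr (- (s + 1)) \<le> cc lg s * (\<bar>y\<bar> powr (-q) * (\<Prod>b\<in>Basis. \<bar>(X1 - x) \<bullet> b\<bar> powr (-p)))"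
          using cc_nn[OF mono] by (rule mult_left_mono)
        then show ?thesis using norm_vgrad_gker[OF mono Z] by (simp add: r_def mult_ac)
      qed
      have "(\<integral>\<^sup>+ x. ennreal (c * (indicator (cube R) x * norm (vgrad (gker lg s) (X - (x, 0::real))))) \<partial>lebesgue)
          \<le> ennreal (c * ((cc lg s * \<bar>y\<bar> powr (-q)) * K1r ^ DIM('a)))"
        by (rule F_generic[OF X1 c A pwf K1])
      also have "\<dots> = ennreal (c * \<Phi> X)" by (simp add: \<Phi>_def X K_def)
      finally show "(\<integral>\<^sup>+ x. ennreal (c * (indicator (cube R) x * norm (vgrad (gker lg s) (X - (x, 0::real))))) \<partial>lebesgue) \<le> ennreal (c * \<Phi> X)" .
    qed
  qed (fact weak Linf)+
  then show ?thesis by (simp add: D_def \<gamma>_def d_def)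
qed


lemma adm_lg: "admissible d lg s \<Longrightarrow> lg \<Longrightarrow> (d = 1 \<or> d = 2) \<and> s = 0" by (simp add: admissible_def)
lemma adm_nlg: "admissible d lg s \<Longrightarrow> \<not> lg \<Longrightarrow> (max 0 (real d - 2) < s \<and> s < real d) \<or> (d \<ge> 3 \<and> s = real d - 2)" by (simp add: admissible_def)
lemma kd4: "kdim d lg s = 1 \<Longrightarrow> lg \<Longrightarrow> d = 1" unfolding kdim_def by (cases "d = 1") auto
lemma kd5: "kdim d lg s = 1 \<Longrightarrow> \<not> lg \<Longrightarrow> max 0 (real d - 2) < s" unfolding kdim_def by (cases "max 0 (real d - 2) < s") auto
lemma kd6: "kdim d lg s \<noteq> 1 \<Longrightarrow> \<not> lg \<Longrightarrow> \<not> max 0 (real d - 2) < s" unfolding kdim_def by (cases "max 0 (real d - 2) < s") auto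
lemma kd7: "kdim d lg s \<noteq> 1 \<Longrightarrow> lg \<Longrightarrow> d \<noteq> 1" unfolding kdim_def by (cases "d = 1") auto
lemma g1: "\<not> lg \<Longrightarrow> max 0 (real d - 2) < s \<Longrightarrow> gam d lg s = s - real d + 1" unfolding gam_def by (simp only: if_False if_True if_P)
lemma g2: "lg \<Longrightarrow> gam d lg s = 0" unfolding gam_def by simp
lemma m1: "mono_ok lg s \<longleftrightarrow> (lg \<longrightarrow> s = 0) \<and> (\<not> lg \<longrightarrow> s > 0)" by (simp add: mono_ok_def)

theorem mainTheorem16:
  fixes lg :: bool and s R \<eta> :: real
    and C :: "'a::euclidean_space multiset" and \<mu> :: "'a \<Rightarrow> real"
    and Cs :: "nat \<Rightarrow> 'a multiset" and \<mu>s :: "nat \<Rightarrow> 'a \<Rightarrow> real"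
  assumes adm: "admissible DIM('a) lg s"
    and R: "R > 0"
    and C: "set_mset C \<subseteq> cube R"
    and \<mu>meas: "set_borel_measurable lebesgue (cube R) \<mu>"
    and \<mu>bdd: "bounded (\<mu> ` cube R)"
    and Cs: "\<And>n. set_mset (Cs n) \<subseteq> cube R"
    and \<mu>smeas: "\<And>n. set_borel_measurable lebesgue (cube R) (\<mu>s n)"
    and \<mu>sbdd: "\<And>n. bounded (\<mu>s n ` cube R)"
    and weak: "\<And>\<phi> :: 'a \<Rightarrow> real. continuous_on (cube R) \<phi> \<Longrightarrow>
                 (\<lambda>n. \<Sum>p\<in>#Cs n. \<phi> p) \<longlonglongrightarrow> (\<Sum>p\<in>#C. \<phi> p)"
    and Linf: "\<And>e. e > 0 \<Longrightarrow>
                 eventually (\<lambda>n. AE x in lebesgue. x \<in> cube R \<longrightarrow> \<bar>\<mu>s n x - \<mu> x\<bar> \<le> e) sequentially"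
    and eta: "0 < \<eta>" "\<eta> < 1"
  shows "(\<lambda>n. energy lg s R \<eta> C (Cs n) \<mu> (\<mu>s n)) \<longlonglongrightarrow> 0"
proof -
  let ?d = "DIM('a)"
  have mono: "mono_ok lg s"
  proof (cases lg)
    case True then show ?thesis using adm_lg[OF adm] by (simp only: m1) blast
  next
    case False
    have "s > 0"
    proof (rule disjE[OF adm_nlg[OF adm False]])
      assume "max 0 (real ?d - 2) < s \<and> s < real ?d" then show ?thesis by linarith
    next
      assume a: "?d \<ge> 3 \<and> s = real ?d - 2"
      then have "real ?d \<ge> 3" by simp
      then show ?thesis using a by linarith
    qed
    then show ?thesis using False by (simp only: m1) blast
  qed
  show ?thesis
  proof (cases "kdim DIM('a) lg s = 1")
    case True
    have sd: "real DIM('a) - 2 < s \<and> s < real DIM('a) \<and> gam DIM('a) lg s = s - real DIM('a) + 1"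
    proof (cases lg)
      case lg: True
      have "?d = 1" using kd4[OF True lg] .
      moreover have "s = 0" using adm_lg[OF adm lg] by blast
      ultimately show ?thesis using g2[OF lg] by simp
    next
      case lg: False
      have k: "max 0 (real ?d - 2) < s" using kd5[OF True lg] .
      have "s < real ?d" using adm_nlg[OF adm lg] k by linarith
      then show ?thesis using k g1[OF lg k] by linarith
    qed
    then have sd: "real DIM('a) - 2 < s" "s < real DIM('a)" "gam DIM('a) lg s = s - real DIM('a) + 1" by auto
    have L: "(\<lambda>n. \<integral>\<^sup>+ X. indicator (cube R \<times> {-R..R}) X * ennreal (\<bar>snd X\<bar> powr (s - real DIM('a) + 1)
            * (norm (Efield lg s R \<eta> (\<lambda>x. (x, 0::real)) C (Cs n) \<mu> (\<mu>s n) X))\<^sup>2) \<partial>lebesgue) \<longlonglongrightarrow> 0"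
      by (rule case1[OF mono sd(1) sd(2) R eta(1)]) (fact weak Linf)+
    show ?thesis unfolding energy_def using L by (simp only: True sd(3) simp_thms if_True)
  next
    case False
    have sd: "s + 1 < real DIM('a)"
    proof (cases lg)
      case lg: True
      have "?d \<noteq> 1" using kd7[OF False lg] .
      moreover have "(?d = 1 \<or> ?d = 2) \<and> s = 0" using adm_lg[OF adm lg] .
      ultimately have "?d = 2 \<and> s = 0" by blast
      then show ?thesis by simp
    next
      case lg: False
      have k: "\<not> max 0 (real ?d - 2) < s" using kd6[OF False lg] .
      have "s = real ?d - 2" using adm_nlg[OF adm lg] k by linarith
      then show ?thesis by simp
    qed
    have L: "(\<lambda>n. \<integral>\<^sup>+ X. indicator (cube R) X * ennreal ((norm (Efield lg s R \<eta> (\<lambda>x. x) C (Cs n) \<mu> (\<mu>s n) X))\<^sup>2) \<partial>lebesgue) \<longlonglongrightarrow> 0"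
      by (rule case0[OF mono sd R eta(1)]) (fact weak Linf)+
    show ?thesis unfolding energy_def using L False by simp
  qed
qed


end
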